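(* Fix $\alpha\in[0,1)$, $\beta\in(0,1)$, $Q=1-\alpha$, $S=1-\beta$. For the combined clumsy-careless collector, with $\mu_n^{\alpha,\beta}:=\mathbb P_{\nu_n^{\alpha,\beta}}(K_0<n,K_1=n)$ and $T_n^{\alpha,\beta}$ the first post-thinning completion time, there are constants $C,c\in(0,\infty)$ depending only on $\alpha,\beta$ such that for all sufficiently large $n$, \[\sup_{A\subseteq[n]}\mathbb P_A\left(\mu_n^{\alpha,\beta}T_n^{\alpha,\beta}>x\right)\le Ce^{-cx},\qquad x\ge0,\] where $\mathbb P_A$ denotes the process started from the set $A$ of present types. In particular this holds for the empty initial collection.
   Context: Combined clumsy-careless collector on $n$ types: the state is the set of present types. In each round one type is drawn uniformly from $[n]$ independently; it is refreshed to present with probability $Q$ and to absent with probability $\alpha$; then every currently present coupon is independently retained with probability $S$. Completion is checked after thinning: $T_n^{\alpha,\beta}=\inf\{t\ge0:\text{all } n \text{ types present at time } t\}$. $K_t$ is the number of present types; it is a Markov chain on $\{0,\dots,n\}$ (given $K_t=k$: with probability $k/n$, $K_{t+1}\sim\mathrm{Bin}(k-1,S)+\mathrm{Bernoulli}(QS)$; with probability $(n-k)/n$, $K_{t+1}\sim\mathrm{Bin}(k,S)+\mathrm{Bernoulli}(QS)$), irreducible and aperiodic with unique stationary law $\nu_n^{\alpha,\beta}$. *)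

theory Defs
  imports "HOL-Probability.Probability"
begin

text \<open>Types are {..<n}. Refresh probability Q = 1 - alpha, retention S = 1 - beta.\<close>

definition thin :: "real \<Rightarrow> nat set \<Rightarrow> nat set pmf" where
  "thin S A = map_pmf (\<lambda>f. {j\<in>A. f j}) (Pi_pmf A False (\<lambda>_. bernoulli_pmf S))"

definition cc_step :: "real \<Rightarrow> real \<Rightarrow> nat \<Rightarrow> nat set \<Rightarrow> nat set pmf" where
  "cc_step \<alpha> \<beta> n A =
     bind_pmf (pmf_of_set {..<n}) (\<lambda>i.
     bind_pmf (bernoulli_pmf (1 - \<alpha>)) (\<lambda>b.
       thin (1 - \<beta>) (if b then insert i A else A - {i})))"

text \<open>cc_surv m: probability, starting from A, that the collection is not complete at any
  of the times 0, 1, ..., m, i.e. P_A(T > m).\<close>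
primrec cc_surv :: "nat \<Rightarrow> real \<Rightarrow> real \<Rightarrow> nat \<Rightarrow> nat set \<Rightarrow> real" where
  "cc_surv 0 \<alpha> \<beta> n A = (if A = {..<n} then 0 else 1)"
| "cc_surv (Suc m) \<alpha> \<beta> n A = (if A = {..<n} then 0 else
      measure_pmf.expectation (cc_step \<alpha> \<beta> n A) (\<lambda>B. cc_surv m \<alpha> \<beta> n B))"

text \<open>Tail P_A(T > t) for real t \<ge> 0 (T is integer valued).\<close>
definition cc_tail :: "real \<Rightarrow> real \<Rightarrow> nat \<Rightarrow> nat set \<Rightarrow> real \<Rightarrow> real" where
  "cc_tail \<alpha> \<beta> n A t = cc_surv (nat \<lfloor>t\<rfloor>) \<alpha> \<beta> n A"

definition K_step :: "real \<Rightarrow> real \<Rightarrow> nat \<Rightarrow> nat \<Rightarrow> nat pmf" where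
  "K_step \<alpha> \<beta> n k =
     bind_pmf (bernoulli_pmf (real k / real n)) (\<lambda>p.
       map_pmf (\<lambda>(x, y). x + (if y then 1 else 0))
         (pair_pmf (binomial_pmf (if p then k - 1 else k) (1 - \<beta>))
                   (bernoulli_pmf ((1 - \<alpha>) * (1 - \<beta>)))))"

definition K_stat :: "real \<Rightarrow> real \<Rightarrow> nat \<Rightarrow> nat pmf" where
  "K_stat \<alpha> \<beta> n = (THE \<nu>. set_pmf \<nu> \<subseteq> {0..n} \<and> bind_pmf \<nu> (K_step \<alpha> \<beta> n) = \<nu>)"

definition cc_mu :: "real \<Rightarrow> real \<Rightarrow> nat \<Rightarrow> real" where
  "cc_mu \<alpha> \<beta> n = (\<Sum>k<n. pmf (K_stat \<alpha> \<beta> n) k * pmf (K_step \<alpha> \<beta> n k) n)"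

end

theory Submission
  imports Defs
begin


definition G :: "real \<Rightarrow> real \<Rightarrow> nat \<Rightarrow> nat \<Rightarrow> real" where
  "G S q m j = q * (if j = 0 then 0 else pmf (binomial_pmf m S) (j - 1)) + (1 - q) * pmf (binomial_pmf m S) j"

lemma pmf_G:
  assumes "0 \<le> S" "S \<le> 1" "0 \<le> q" "q \<le> 1"
  shows "pmf (map_pmf (\<lambda>(x, y). x + (if y then 1 else 0)) (pair_pmf (binomial_pmf m S) (bernoulli_pmf q))) j = G S q m j"
proof -
  have e: "map_pmf (\<lambda>(x, y). x + (if y then 1 else 0)) (pair_pmf (binomial_pmf m S) (bernoulli_pmf q))
     = bind_pmf (bernoulli_pmf q) (\<lambda>y. map_pmf (\<lambda>x. x + (if y then 1 else 0)) (binomial_pmf m S))"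
    unfolding pair_pmf_def map_pmf_def
    apply (subst bind_commute_pmf)
    by (simp add: bind_assoc_pmf bind_return_pmf)
  have s: "pmf (map_pmf Suc X) j = (if j = 0 then 0 else pmf X (j - 1))" for X :: "nat pmf"
  proof (cases j)
    case 0 then show ?thesis by (auto simp: pmf_map vimage_def measure_pmf_zero_iff)
  next
    case (Suc i)
    then show ?thesis using pmf_map_inj'[of Suc X i] by simp
  qed
  show ?thesis unfolding e G_def using assms
    by (simp add: pmf_bind s[symmetric] Suc_eq_plus1[symmetric] del: Suc_eq_plus1 cong: map_pmf_cong) 
qed


lemma pmf_binomial_Suc':
  assumes "0 \<le> S" "S \<le> 1"
  shows "pmf (binomial_pmf (Suc m) S) j = S * (if j = 0 then 0 else pmf (binomial_pmf m S) (j - 1)) + (1 - S) * pmf (binomial_pmf m S) j"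
proof -
  have s: "pmf (map_pmf Suc X) j = (if j = 0 then 0 else pmf X (j - 1))" for X :: "nat pmf"
  proof (cases j)
    case 0 then show ?thesis by (auto simp: pmf_map vimage_def measure_pmf_zero_iff)
  next
    case (Suc i)
    then show ?thesis using pmf_map_inj'[of Suc X i] by simp
  qed
  have "binomial_pmf (Suc m) S = bind_pmf (bernoulli_pmf S) (\<lambda>b. map_pmf (\<lambda>k. (if b then 1 else 0) + k) (binomial_pmf m S))"
    using assms by (simp add: binomial_pmf_Suc map_pmf_def)
  then show ?thesis using assms
    by (simp add: pmf_bind s[symmetric] cong: map_pmf_cong)
qed

lemma pmf_K_step:
  assumes "0 \<le> \<alpha>" "\<alpha> \<le> 1" "0 \<le> \<beta>" "\<beta> \<le> 1" "0 < n" "k \<le> n"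
  shows "pmf (K_step \<alpha> \<beta> n k) j = real k / real n * G (1-\<beta>) ((1-\<alpha>)*(1-\<beta>)) (k - 1) j
            + (1 - real k / real n) * G (1-\<beta>) ((1-\<alpha>)*(1-\<beta>)) k j"
proof -
  have q: "0 \<le> (1-\<alpha>)*(1-\<beta>)" "(1-\<alpha>)*(1-\<beta>) \<le> 1" using assms by (auto simp: mult_le_one)
  have kn: "real k / real n \<le> 1" using assms by auto
  show ?thesis unfolding K_step_def using assms q kn
    by (simp add: pmf_bind pmf_G)
qed

lemma map_card_thin:
  assumes "finite X" "0 \<le> S" "S \<le> 1"
  shows "map_pmf card (thin S X) = binomial_pmf (card X) S"
  using binomial_pmf_altdef'[OF assms(1) refl, of S False] assms
  by (simp add: thin_def pmf.map_comp o_def)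

lemma map_card_cc_step:
  assumes "0 \<le> \<alpha>" "\<alpha> \<le> 1" "0 \<le> \<beta>" "\<beta> \<le> 1" "0 < n" "A \<subseteq> {..<n}"
  shows "map_pmf card (cc_step \<alpha> \<beta> n A) = K_step \<alpha> \<beta> n (card A)"
proof (rule pmf_eqI)
  fix j
  define S where "S = 1 - \<beta>"
  define Q where "Q = 1 - \<alpha>"
  define B where "B m i = pmf (binomial_pmf m S) i" for m i
  define k where "k = card A"
  have fA: "finite A" using assms finite_subset by blast
  have kn: "k \<le> n" using card_mono[OF _ assms(6)] k_def by simp
  have S01: "0 \<le> S" "S \<le> 1" using assms S_def by auto
  have Q01: "0 \<le> Q" "Q \<le> 1" using assms Q_def by auto
  have key: "Q * B (Suc m) j + (1 - Q) * B m j = G S (Q*S) m j" for m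
  proof -
    have e: "B (Suc m) j = S * (if j = 0 then 0 else B m (j - 1)) + (1 - S) * B m j"
      unfolding B_def by (rule pmf_binomial_Suc'[OF S01])
    show ?thesis unfolding G_def B_def[symmetric] e
      by (cases "j = 0") (simp_all add: algebra_simps)
  qed
  have step: "map_pmf card (cc_step \<alpha> \<beta> n A) = bind_pmf (pmf_of_set {..<n}) (\<lambda>i.
     bind_pmf (bernoulli_pmf Q) (\<lambda>b. binomial_pmf (card (if b then insert i A else A - {i})) S))"
    unfolding cc_step_def map_bind_pmf using fA S01
    by (simp add: map_card_thin Q_def S_def)
  have f: "(\<lambda>i. Q * B (card (insert i A)) j + (1 - Q) * B (card (A - {i})) j)
        = (\<lambda>i. if i \<in> A then G S (Q*S) (k - 1) j else G S (Q*S) k j)"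
  proof
    fix i show "Q * B (card (insert i A)) j + (1 - Q) * B (card (A - {i})) j = (if i \<in> A then G S (Q*S) (k - 1) j else G S (Q*S) k j)"
    proof (cases "i \<in> A")
      case True
      have c1: "card (insert i A) = k" using True k_def by (simp add: insert_absorb)
      have c2: "card (A - {i}) = k - 1" using True k_def fA by simp
      have "k \<noteq> 0" using True fA k_def by auto
      then have c3: "k = Suc (k - 1)" by simp
      have "Q * B k j + (1 - Q) * B (k - 1) j = G S (Q*S) (k - 1) j"
        using key[of "k-1"] c3 by metis
      then show ?thesis using True by (simp only: c1 c2 if_True)
    next
      case False
      have c1: "card (insert i A) = Suc k" using False k_def fA by simp
      have c2: "card (A - {i}) = k" using False k_def by simp
      show ?thesis using False key[of k] by (simp only: c1 c2 if_False)
    qed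
  qed
  have sum: "(\<Sum>i<n. (if i \<in> A then G S (Q*S) (k - 1) j else G S (Q*S) k j))
     = real k * G S (Q*S) (k - 1) j + real (n - k) * G S (Q*S) k j"
  proof -
    have e1: "{..<n} \<inter> A = A" using assms by auto
    have e2: "{..<n} \<inter> - A = {..<n} - A" by auto
    have c: "card ({..<n} - A) = n - k" using card_Diff_subset[OF fA assms(6)] k_def by simp
    have "(\<Sum>i<n. (if i \<in> A then G S (Q*S) (k - 1) j else G S (Q*S) k j))
       = real (card ({..<n} \<inter> A)) * G S (Q*S) (k - 1) j + real (card ({..<n} \<inter> - A)) * G S (Q*S) k j"
      unfolding sum.If_cases[OF finite_lessThan] sum_constant by simp
    also have "\<dots> = real k * G S (Q*S) (k - 1) j + real (n - k) * G S (Q*S) k j"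
      using e1 e2 c k_def by simp
    finally show ?thesis .
  qed
  have "pmf (map_pmf card (cc_step \<alpha> \<beta> n A)) j
      = (\<Sum>i<n. Q * B (card (insert i A)) j + (1 - Q) * B (card (A - {i})) j) / real n"
    unfolding step using assms Q01
    by (simp add: pmf_bind B_def, subst integral_pmf_of_set) (auto simp: mult.commute)
  also have "\<dots> = (real k * G S (Q*S) (k - 1) j + real (n - k) * G S (Q*S) k j) / real n"
    by (simp only: f sum)
  also have "\<dots> = pmf (K_step \<alpha> \<beta> n (card A)) j"
  proof -
    have "pmf (K_step \<alpha> \<beta> n (card A)) j = real k / real n * G S (Q*S) (k - 1) j + (1 - real k / real n) * G S (Q*S) k j"
      using pmf_K_step[OF assms(1-5) kn, of j] unfolding k_def S_def Q_def by simp
    then show ?thesis using assms(5) kn by (simp add: field_simps of_nat_diff)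
  qed
  finally show "pmf (map_pmf card (cc_step \<alpha> \<beta> n A)) j = pmf (K_step \<alpha> \<beta> n (card A)) j" .
qed


lemma set_binomial_sub: "0 \<le> p \<Longrightarrow> p \<le> 1 \<Longrightarrow> set_pmf (binomial_pmf m p) \<subseteq> {..m}"
  by (auto simp: set_pmf_binomial_eq)

lemma K_support:
  assumes "0 \<le> \<beta>" "\<beta> \<le> 1"
  shows "set_pmf (K_step \<alpha> \<beta> n k) \<subseteq> {..Suc k}"
proof -
  have S: "0 \<le> 1 - \<beta>" "1 - \<beta> \<le> 1" using assms by auto
  have m: "set_pmf (map_pmf (\<lambda>(x, y). x + (if y then 1 else 0)) (pair_pmf (binomial_pmf m (1-\<beta>)) (bernoulli_pmf q))) \<subseteq> {..Suc m}" for m q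
  proof
    fix z assume "z \<in> set_pmf (map_pmf (\<lambda>(x, y). x + (if y then 1 else 0)) (pair_pmf (binomial_pmf m (1-\<beta>)) (bernoulli_pmf q)))"
    then obtain x y where "x \<in> set_pmf (binomial_pmf m (1-\<beta>))" "z = x + (if y then 1 else 0)"
      by (auto simp: set_pair_pmf)
    then show "z \<in> {..Suc m}" using set_binomial_sub[OF S, of m] by auto
  qed
  show ?thesis unfolding K_step_def set_bind_pmf
  proof (rule UN_least)
    fix p show "set_pmf (map_pmf (\<lambda>(x, y). x + (if y then 1 else 0))
               (pair_pmf (binomial_pmf (if p then k - 1 else k) (1 - \<beta>)) (bernoulli_pmf ((1 - \<alpha>) * (1 - \<beta>))))) \<subseteq> {..Suc k}"
      using m[of "if p then k - 1 else k" "(1 - \<alpha>) * (1 - \<beta>)"] by (cases p) auto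
  qed
qed

definition PK :: "real \<Rightarrow> real \<Rightarrow> nat \<Rightarrow> (nat \<Rightarrow> real) \<Rightarrow> nat \<Rightarrow> real" where
  "PK \<alpha> \<beta> n f k = (\<Sum>j\<le>Suc k. pmf (K_step \<alpha> \<beta> n k) j * f j)"

lemma PK_expectation:
  assumes "0 \<le> \<beta>" "\<beta> \<le> 1"
  shows "measure_pmf.expectation (K_step \<alpha> \<beta> n k) f = PK \<alpha> \<beta> n f k"
  unfolding PK_def
  by (subst integral_measure_pmf_real[where A="{..Suc k}"]) (use K_support[OF assms] in \<open>auto simp: mult.commute\<close>)

lemma PK_one:
  assumes "0 \<le> \<beta>" "\<beta> \<le> 1"
  shows "(\<Sum>j\<le>Suc k. pmf (K_step \<alpha> \<beta> n k) j) = 1"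
  by (rule sum_pmf_eq_1) (use K_support[OF assms] in auto)

lemma PK_mono:
  "(\<And>j. j \<le> Suc k \<Longrightarrow> f j \<le> g j) \<Longrightarrow> PK \<alpha> \<beta> n f k \<le> PK \<alpha> \<beta> n g k"
  unfolding PK_def by (intro sum_mono mult_left_mono) auto

lemma PK_add: "PK \<alpha> \<beta> n (\<lambda>j. f j + g j) k = PK \<alpha> \<beta> n f k + PK \<alpha> \<beta> n g k"
  unfolding PK_def by (simp add: distrib_left sum.distrib)

lemma PK_diff: "PK \<alpha> \<beta> n (\<lambda>j. f j - g j) k = PK \<alpha> \<beta> n f k - PK \<alpha> \<beta> n g k"
  unfolding PK_def by (simp add: right_diff_distrib sum_subtractf)

lemma PK_scale: "PK \<alpha> \<beta> n (\<lambda>j. c * f j) k = c * PK \<alpha> \<beta> n f k"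
  unfolding PK_def by (simp add: sum_distrib_left algebra_simps)

lemma PK_const:
  assumes "0 \<le> \<beta>" "\<beta> \<le> 1"
  shows "PK \<alpha> \<beta> n (\<lambda>j. c) k = c"
  unfolding PK_def using PK_one[OF assms, of \<alpha> n k] by (simp add: sum_distrib_right[symmetric])

lemma PK_ge_single:
  assumes "\<And>j. j \<le> Suc k \<Longrightarrow> 0 \<le> f j" "j0 \<le> Suc k"
  shows "pmf (K_step \<alpha> \<beta> n k) j0 * f j0 \<le> PK \<alpha> \<beta> n f k"
  unfolding PK_def
  by (rule member_le_sum) (use assms in auto)

primrec Fs :: "real \<Rightarrow> real \<Rightarrow> nat \<Rightarrow> nat \<Rightarrow> nat \<Rightarrow> real" where
  "Fs \<alpha> \<beta> n 0 k = (if k = n then 0 else 1)"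
| "Fs \<alpha> \<beta> n (Suc m) k = (if k = n then 0 else PK \<alpha> \<beta> n (Fs \<alpha> \<beta> n m) k)"

lemma set_thin: "set_pmf (thin S X) \<subseteq> Pow X"
  unfolding thin_def by auto

lemma set_cc_step:
  assumes "0 < n" "A \<subseteq> {..<n}"
  shows "set_pmf (cc_step \<alpha> \<beta> n A) \<subseteq> Pow {..<n}"
proof -
  have "\<And>i b. i < n \<Longrightarrow> (if b then insert i A else A - {i}) \<subseteq> {..<n}" using assms by auto
  then show ?thesis unfolding cc_step_def set_bind_pmf
  proof (intro UN_least)
    fix i b assume i: "i \<in> set_pmf (pmf_of_set {..<n})"
    have "i < n" using i assms by (subst (asm) set_pmf_of_set) auto
    then have X: "(if b then insert i A else A - {i}) \<subseteq> {..<n}" using assms by auto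
    have "set_pmf (thin (1 - \<beta>) (if b then insert i A else A - {i})) \<subseteq> Pow (if b then insert i A else A - {i})"
      by (rule set_thin)
    then show "set_pmf (thin (1 - \<beta>) (if b then insert i A else A - {i})) \<subseteq> Pow {..<n}" using X by blast
  qed
qed

lemma cc_surv_Fs:
  assumes "0 \<le> \<alpha>" "\<alpha> \<le> 1" "0 \<le> \<beta>" "\<beta> \<le> 1" "0 < n"
  shows "A \<subseteq> {..<n} \<Longrightarrow> cc_surv m \<alpha> \<beta> n A = Fs \<alpha> \<beta> n m (card A)"
proof (induction m arbitrary: A)
  case 0
  have "A = {..<n} \<longleftrightarrow> card A = n" using 0 card_subset_eq[of "{..<n}" A] by auto
  then show ?case by simp
next
  case (Suc m)
  have eq: "A = {..<n} \<longleftrightarrow> card A = n" using Suc.prems card_subset_eq[of "{..<n}" A] by auto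
  have "measure_pmf.expectation (cc_step \<alpha> \<beta> n A) (\<lambda>B. cc_surv m \<alpha> \<beta> n B)
      = measure_pmf.expectation (cc_step \<alpha> \<beta> n A) (\<lambda>B. Fs \<alpha> \<beta> n m (card B))"
  proof (intro integral_cong_AE)
    have sub: "\<And>B. B \<in> set_pmf (cc_step \<alpha> \<beta> n A) \<Longrightarrow> B \<subseteq> {..<n}"
      using set_cc_step[OF assms(5) Suc.prems] by blast
    show "AE B in measure_pmf (cc_step \<alpha> \<beta> n A). cc_surv m \<alpha> \<beta> n B = Fs \<alpha> \<beta> n m (card B)"
      unfolding AE_measure_pmf_iff using sub Suc.IH by blast
  qed auto
  also have "\<dots> = measure_pmf.expectation (map_pmf card (cc_step \<alpha> \<beta> n A)) (Fs \<alpha> \<beta> n m)"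
    by simp
  also have "\<dots> = PK \<alpha> \<beta> n (Fs \<alpha> \<beta> n m) (card A)"
    using map_card_cc_step[OF assms Suc.prems] PK_expectation assms by simp
  finally show ?case using eq by simp
qed


lemma Bpmf_zero: "0 \<le> p \<Longrightarrow> p \<le> 1 \<Longrightarrow> m < j \<Longrightarrow> pmf (binomial_pmf m p) j = 0"
  by (simp add: pmf_binomial)

lemma G_0: "0 \<le> S \<Longrightarrow> S \<le> 1 \<Longrightarrow> G S q m 0 = (1 - q) * (1 - S) ^ m"
  by (simp add: G_def pmf_binomial)

lemma G_Suc: "0 \<le> S \<Longrightarrow> S \<le> 1 \<Longrightarrow> G S q m (Suc m) = q * S ^ m"
  by (simp add: G_def pmf_binomial)

lemma G_same: "0 \<le> S \<Longrightarrow> S \<le> 1 \<Longrightarrow> G S q (Suc m) (Suc m) = q * real (Suc m) * S ^ m * (1 - S) + (1 - q) * S ^ Suc m"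
  by (simp add: G_def pmf_binomial)

lemma G_big: "0 \<le> S \<Longrightarrow> S \<le> 1 \<Longrightarrow> Suc m < j \<Longrightarrow> G S q m j = 0"
  by (simp add: G_def pmf_binomial binomial_eq_0)

lemma G_nonneg: "0 \<le> S \<Longrightarrow> S \<le> 1 \<Longrightarrow> 0 \<le> q \<Longrightarrow> q \<le> 1 \<Longrightarrow> 0 \<le> G S q m j"
  unfolding G_def by (intro add_nonneg_nonneg mult_nonneg_nonneg) auto

context
  fixes \<alpha> \<beta> :: real and n :: nat
  assumes a0: "0 \<le> \<alpha>" and a1: "\<alpha> < 1" and b0: "0 < \<beta>" and b1: "\<beta> < 1" and n0: "0 < n"
begin

lemma Sb: "0 \<le> 1 - \<beta>" "1 - \<beta> \<le> 1" using b0 b1 by auto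

lemma pK: "k \<le> n \<Longrightarrow> pmf (K_step \<alpha> \<beta> n k) j = real k / real n * G (1-\<beta>) ((1-\<alpha>)*(1-\<beta>)) (k - 1) j
            + (1 - real k / real n) * G (1-\<beta>) ((1-\<alpha>)*(1-\<beta>)) k j"
  using pmf_K_step[of \<alpha> \<beta> n k j] a0 a1 b0 b1 n0 by simp

lemma aK: "k \<le> n \<Longrightarrow> pmf (K_step \<alpha> \<beta> n k) (Suc k) = (1 - real k / real n) * ((1-\<alpha>)*(1-\<beta>)) * (1-\<beta>) ^ k"
proof -
  assume kn: "k \<le> n"
  have "real k / real n * G (1-\<beta>) ((1-\<alpha>)*(1-\<beta>)) (k - 1) (Suc k) = 0"
  proof (cases k)
    case (Suc k') then show ?thesis using G_big[OF Sb, of "k-1" "Suc k"] by simp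
  qed simp
  then show ?thesis using pK[OF kn, of "Suc k"] G_Suc[OF Sb] by simp
qed

lemma p0K: "k \<le> n \<Longrightarrow> (1 - (1-\<alpha>)*(1-\<beta>)) * \<beta> ^ k \<le> pmf (K_step \<alpha> \<beta> n k) 0"
proof -
  assume kn: "k \<le> n"
  define c where "c = 1 - (1-\<alpha>)*(1-\<beta>)"
  have c0: "0 \<le> c" using a0 a1 b0 b1 unfolding c_def by (simp add: mult_le_one)
  have t: "real k / real n \<le> 1" "0 \<le> real k / real n" using kn n0 by auto
  have "\<beta> ^ k \<le> (if k = 0 then 1 else \<beta> ^ (k - 1))"
    using b0 b1 by (cases k) (auto simp: mult_le_cancel_right1 less_imp_le)
  have "pmf (K_step \<alpha> \<beta> n k) 0 = real k / real n * (c * \<beta> ^ (k - 1)) + (1 - real k / real n) * (c * \<beta> ^ k)"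
    using pK[OF kn, of 0] unfolding G_0[OF Sb] c_def by simp
  also have "\<dots> \<ge> real k / real n * (c * \<beta> ^ k) + (1 - real k / real n) * (c * \<beta> ^ k)"
  proof (cases k)
    case (Suc k')
    have "\<beta> ^ k \<le> \<beta> ^ (k - 1)" using Suc b0 b1 by (simp add: mult_le_cancel_right1 less_imp_le)
    then show ?thesis using t c0 by (intro add_right_mono mult_left_mono) auto
  qed simp
  finally show ?thesis unfolding c_def by (simp add: algebra_simps)
qed

lemma pow_bern: "k \<ge> 1 \<Longrightarrow> (1-\<beta>) ^ k * (1 + real k * \<beta>) \<le> 1 - \<beta>^2"
proof (induction k rule: dec_induct)
  case base then show ?case by (simp add: algebra_simps power2_eq_square)
next
  case (step k)
  have "(1-\<beta>) ^ Suc k * (1 + real (Suc k) * \<beta>) = (1-\<beta>) ^ k * ((1-\<beta>) * (1 + real (Suc k) * \<beta>))"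
    by simp
  also have "\<dots> \<le> (1-\<beta>) ^ k * (1 + real k * \<beta>)"
  proof (rule mult_left_mono)
    show "(1-\<beta>) * (1 + real (Suc k) * \<beta>) \<le> 1 + real k * \<beta>"
      using b0 by (simp add: algebra_simps)
  qed (use b1 in simp)
  finally show ?case using step by simp
qed

lemma topK:
  assumes kn: "k \<le> n" and k1: "1 \<le> k"
  shows "pmf (K_step \<alpha> \<beta> n k) k + pmf (K_step \<alpha> \<beta> n k) (Suc k) \<le> 1 - \<beta>^2"
    and "pmf (K_step \<alpha> \<beta> n k) k + pmf (K_step \<alpha> \<beta> n k) (Suc k) \<le> real (Suc k) * (1-\<beta>) ^ (k - 1)"
proof -
  define S where "S = 1 - \<beta>"
  define q where "q = (1-\<alpha>)*(1-\<beta>)"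
  define t where "t = real k / real n"
  have t: "t \<le> 1" "0 \<le> t" using kn n0 unfolding t_def by auto
  have S: "0 \<le> S" "S \<le> 1" "S < 1" using b0 b1 unfolding S_def by auto
  have q: "0 \<le> q" "q \<le> S" using a0 a1 b0 b1 unfolding q_def S_def by (auto simp: mult_le_cancel_right1)
  obtain k' where k': "k = Suc k'" using k1 by (cases k) auto
  have e1: "pmf (K_step \<alpha> \<beta> n k) k = t * (q * S ^ k') + (1 - t) * (q * real k * S ^ k' * \<beta> + (1 - q) * S ^ k)"
    using pK[OF kn, of k] unfolding k' G_same[OF Sb] S_def q_def t_def by (simp add: G_Suc[OF Sb])
  have e2: "pmf (K_step \<alpha> \<beta> n k) (Suc k) = (1 - t) * q * S ^ k"
    using aK[OF kn] unfolding S_def q_def t_def by simp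
  define X where "X = q * S ^ k'"
  define Y where "Y = q * real k * S ^ k' * \<beta> + S ^ k"
  have sum: "pmf (K_step \<alpha> \<beta> n k) k + pmf (K_step \<alpha> \<beta> n k) (Suc k) = t * X + (1 - t) * Y"
    unfolding e1 e2 X_def Y_def by (simp add: algebra_simps)
  have Sk: "S ^ k = S * S ^ k'" using k' by simp
  have X1: "X \<le> S ^ k" unfolding X_def Sk using q S by (intro mult_right_mono) auto
  have X2: "X \<le> S ^ k'" unfolding X_def using q S by (intro mult_left_le_one_le) auto
  have Y1: "Y \<le> S ^ k * (1 + real k * \<beta>)"
  proof -
    have "q * real k * S ^ k' * \<beta> \<le> S * real k * S ^ k' * \<beta>"
      using q S b0 by (intro mult_right_mono) auto
    then show ?thesis unfolding Y_def Sk by (simp add: algebra_simps)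
  qed
  have Y2: "Y \<le> real k * S ^ k' + S ^ k'"
  proof -
    have qb: "q * \<beta> \<le> 1" using q S b0 b1 by (intro mult_le_one) auto
    have "q * real k * S ^ k' * \<beta> = (q * \<beta>) * (real k * S ^ k')" by simp
    also have "\<dots> \<le> real k * S ^ k'" using qb q b0 S by (intro mult_left_le_one_le) auto
    finally have "q * real k * S ^ k' * \<beta> \<le> real k * S ^ k'" .
    moreover have "S ^ k \<le> S ^ k'" unfolding Sk using S by (intro mult_left_le_one_le) auto
    ultimately show ?thesis unfolding Y_def by simp
  qed
  have pb: "S ^ k * (1 + real k * \<beta>) \<le> 1 - \<beta>^2" using pow_bern[OF k1] unfolding S_def .
  have Sb: "S ^ k \<le> 1 - \<beta>^2"
  proof -
    have "S ^ k \<le> S ^ k * (1 + real k * \<beta>)" using S b0 by (simp add: mult_le_cancel_left1)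
    then show ?thesis using pb by simp
  qed
  have "t * X + (1 - t) * Y \<le> t * (1 - \<beta>^2) + (1 - t) * (1 - \<beta>^2)"
    using X1 Sb Y1 pb t by (intro add_mono mult_left_mono) auto
  then show "pmf (K_step \<alpha> \<beta> n k) k + pmf (K_step \<alpha> \<beta> n k) (Suc k) \<le> 1 - \<beta>^2"
    using sum by (simp add: algebra_simps)
  have "t * X + (1 - t) * Y \<le> t * (real (Suc k) * S ^ k') + (1 - t) * (real (Suc k) * S ^ k')"
  proof (intro add_mono mult_left_mono)
    have "0 \<le> real k * S ^ k'" using S by simp
    moreover have "real (Suc k) * S ^ k' = S ^ k' + real k * S ^ k'" by (simp add: algebra_simps)
    ultimately show "X \<le> real (Suc k) * S ^ k'" using X2 by linarith
    show "Y \<le> real (Suc k) * S ^ k'" using Y2 by (simp add: algebra_simps)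
  qed (use t in auto)
  then show "pmf (K_step \<alpha> \<beta> n k) k + pmf (K_step \<alpha> \<beta> n k) (Suc k) \<le> real (Suc k) * (1-\<beta>) ^ (k - 1)"
    using sum k' unfolding S_def by (simp add: algebra_simps)
qed

end


lemma sum_lin: "(\<Sum>j\<in>A. (a * f j + b * g j) * h j :: real) = a * (\<Sum>j\<in>A. f j * h j) + b * (\<Sum>j\<in>A. g j * h j)"
  by (simp add: distrib_right sum.distrib sum_distrib_left mult.assoc)

lemma binom_sum1: "0 \<le> p \<Longrightarrow> p \<le> 1 \<Longrightarrow> m \<le> N \<Longrightarrow> (\<Sum>j\<le>N. pmf (binomial_pmf m p) j) = 1"
  by (rule sum_pmf_eq_1) (use set_binomial_sub[of p m] in auto)

lemma shift_sum:
  "(\<Sum>j\<le>Suc N. (if j = 0 then 0 else f (j - 1)) * real j) = (\<Sum>i\<le>N. f i * (real i + 1))"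
  by (subst sum.atMost_Suc_shift) (simp add: algebra_simps)

lemma binom_mean: "0 \<le> p \<Longrightarrow> p \<le> 1 \<Longrightarrow> m \<le> N \<Longrightarrow> (\<Sum>j\<le>N. pmf (binomial_pmf m p) j * real j) = real m * p"
proof (induction m arbitrary: N)
  case 0
  then show ?case by (auto simp: pmf_binomial binomial_eq_0 intro!: sum.neutral)
next
  case (Suc m)
  obtain N' where N: "N = Suc N'" "m \<le> N'" using Suc.prems by (cases N) auto
  have e: "pmf (binomial_pmf (Suc m) p) j = p * (if j = 0 then 0 else pmf (binomial_pmf m p) (j - 1)) + (1 - p) * pmf (binomial_pmf m p) j" for j
    using pmf_binomial_Suc'[of p m j] Suc.prems by simp
  have "(\<Sum>j\<le>N. pmf (binomial_pmf (Suc m) p) j * real j)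
     = p * (\<Sum>j\<le>Suc N'. (if j = 0 then 0 else pmf (binomial_pmf m p) (j - 1)) * real j)
       + (1 - p) * (\<Sum>j\<le>N. pmf (binomial_pmf m p) j * real j)"
    unfolding e N(1) sum_lin by simp
  also have "(\<Sum>j\<le>Suc N'. (if j = 0 then 0 else pmf (binomial_pmf m p) (j - 1)) * real j)
      = (\<Sum>i\<le>N'. pmf (binomial_pmf m p) i * real i) + (\<Sum>i\<le>N'. pmf (binomial_pmf m p) i)"
    unfolding shift_sum by (simp add: distrib_left sum.distrib)
  also have "\<dots> = real m * p + 1" using Suc.IH[of N'] binom_sum1[of p m N'] Suc.prems N by simp
  also have "(\<Sum>j\<le>N. pmf (binomial_pmf m p) j * real j) = real m * p" using Suc.IH[of N] Suc.prems by simp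
  finally show ?case by (simp add: algebra_simps)
qed

lemma G_mean:
  assumes "0 \<le> S" "S \<le> 1" "Suc m \<le> N"
  shows "(\<Sum>j\<le>N. G S q m j * real j) = real m * S + q"
proof -
  obtain N' where N: "N = Suc N'" "m \<le> N'" using assms by (cases N) auto
  have "(\<Sum>j\<le>N. G S q m j * real j)
      = q * (\<Sum>j\<le>Suc N'. (if j = 0 then 0 else pmf (binomial_pmf m S) (j - 1)) * real j)
        + (1 - q) * (\<Sum>j\<le>N. pmf (binomial_pmf m S) j * real j)"
    unfolding G_def N(1) sum_lin by simp
  also have "(\<Sum>j\<le>Suc N'. (if j = 0 then 0 else pmf (binomial_pmf m S) (j - 1)) * real j)
      = (\<Sum>i\<le>N'. pmf (binomial_pmf m S) i * real i) + (\<Sum>i\<le>N'. pmf (binomial_pmf m S) i)"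
    unfolding shift_sum by (simp add: distrib_left sum.distrib)
  also have "\<dots> = real m * S + 1" using binom_mean[of S m N'] binom_sum1[of S m N'] assms N by simp
  also have "(\<Sum>j\<le>N. pmf (binomial_pmf m S) j * real j) = real m * S" using binom_mean[of S m N] assms by simp
  finally show ?thesis by (simp add: algebra_simps)
qed

context
  fixes \<alpha> \<beta> :: real and n :: nat
  assumes a0: "0 \<le> \<alpha>" and a1: "\<alpha> < 1" and b0: "0 < \<beta>" and b1: "\<beta> < 1" and n0: "0 < n"
begin

lemma PK_mean:
  assumes kn: "k \<le> n"
  shows "PK \<alpha> \<beta> n real k \<le> (1-\<beta>) * real k + (1-\<alpha>)*(1-\<beta>)"
proof -
  define S where "S = 1 - \<beta>"
  define q where "q = (1-\<alpha>)*S"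
  define t where "t = real k / real n"
  have S: "0 \<le> S" "S \<le> 1" using b0 b1 unfolding S_def by auto
  have t: "t \<le> 1" "0 \<le> t" using kn n0 unfolding t_def by auto
  have "PK \<alpha> \<beta> n real k = t * (\<Sum>j\<le>Suc k. G S q (k - 1) j * real j) + (1 - t) * (\<Sum>j\<le>Suc k. G S q k j * real j)"
    unfolding PK_def pK[OF a0 a1 b0 b1 n0 kn] S_def[symmetric] q_def[symmetric] t_def[symmetric] sum_lin
    by simp
  also have "\<dots> = t * (real (k - 1) * S + q) + (1 - t) * (real k * S + q)"
    using G_mean[OF S, of "k - 1" "Suc k" q] G_mean[OF S, of k "Suc k" q] by simp
  also have "\<dots> \<le> t * (real k * S + q) + (1 - t) * (real k * S + q)"
    using t S by (intro add_right_mono mult_left_mono) (auto intro: mult_right_mono)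
  finally show ?thesis unfolding S_def q_def by (simp add: algebra_simps)
qed

end


context
  fixes \<alpha> \<beta> :: real and n :: nat
  assumes a0: "0 \<le> \<alpha>" and a1: "\<alpha> < 1" and b0: "0 < \<beta>" and b1: "\<beta> < 1" and n0: "0 < n"
begin

abbreviation "P i j \<equiv> pmf (K_step \<alpha> \<beta> n i) j"

definition "dl = (1 - (1-\<alpha>)*(1-\<beta>)) * \<beta> ^ n"

lemma dl_pos: "0 < dl" "dl \<le> 1"
proof -
  have "(1-\<alpha>)*(1-\<beta>) \<le> (1-\<beta>)" using a0 a1 b0 b1 by (intro mult_left_le_one_le) auto
  then have "(1-\<alpha>)*(1-\<beta>) < 1" using b0 by linarith
  moreover have "0 \<le> (1-\<alpha>)*(1-\<beta>)" using a1 b1 by simp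
  moreover have "\<beta> ^ n \<le> 1" "0 < \<beta> ^ n" using b0 b1 by (auto simp: power_le_one)
  ultimately show "0 < dl" "dl \<le> 1" unfolding dl_def by (auto simp: mult_le_one)
qed

lemma P_supp: "i \<le> n \<Longrightarrow> n < j \<Longrightarrow> P i j = 0"
proof -
  assume i: "i \<le> n" and j: "n < j"
  show "P i j = 0"
  proof (cases "j = Suc i")
    case True
    then have "i = n" using i j by simp
    then show ?thesis using True aK[OF a0 a1 b0 b1 n0, of n] n0 by simp
  next
    case False
    then have "j \<notin> set_pmf (K_step \<alpha> \<beta> n i)" using K_support[of \<beta> \<alpha> n i] b0 b1 i j by auto
    then show ?thesis by (simp add: set_pmf_iff)
  qed
qed

lemma P_row: "i \<le> n \<Longrightarrow> (\<Sum>j\<le>n. P i j) = 1"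
proof -
  assume i: "i \<le> n"
  have "set_pmf (K_step \<alpha> \<beta> n i) \<subseteq> {..n}"
  proof
    fix x assume "x \<in> set_pmf (K_step \<alpha> \<beta> n i)"
    then have "P i x \<noteq> 0" by (simp add: set_pmf_iff)
    then show "x \<in> {..n}" using P_supp[OF i, of x] by force
  qed
  then show ?thesis by (intro sum_pmf_eq_1) auto
qed

lemma P0: "i \<le> n \<Longrightarrow> dl \<le> P i 0"
proof -
  assume i: "i \<le> n"
  have "\<beta> ^ n \<le> \<beta> ^ i" using i b0 b1 by (intro power_decreasing) auto
  moreover have "0 \<le> 1 - (1-\<alpha>)*(1-\<beta>)" using dl_pos unfolding dl_def using b0 b1
    by (simp add: zero_less_mult_iff)
  ultimately have "dl \<le> (1 - (1-\<alpha>)*(1-\<beta>)) * \<beta> ^ i" unfolding dl_def by (intro mult_left_mono)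
  then show ?thesis using p0K[OF a0 a1 b0 b1 n0 i] by linarith
qed

definition T :: "(nat \<Rightarrow> real) \<Rightarrow> nat \<Rightarrow> real" where
  "T v j = (\<Sum>i\<le>n. v i * P i j)"

lemma contraction:
  assumes "(\<Sum>i\<le>n. d i) = 0"
  shows "(\<Sum>j\<le>n. \<bar>T d j\<bar>) \<le> (1 - dl) * (\<Sum>i\<le>n. \<bar>d i\<bar>)"
proof -
  define R where "R i j = P i j - (if j = 0 then dl else 0)" for i j
  have Rnn: "i \<le> n \<Longrightarrow> 0 \<le> R i j" for i j using P0 unfolding R_def by auto
  have Td: "T d j = (\<Sum>i\<le>n. d i * R i j)" for j
  proof -
    have "(\<Sum>i\<le>n. d i * R i j) = (\<Sum>i\<le>n. d i * P i j) - (\<Sum>i\<le>n. d i) * (if j = 0 then dl else 0)"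
      unfolding R_def by (simp add: right_diff_distrib sum_subtractf sum_distrib_right)
    then show ?thesis using assms unfolding T_def by simp
  qed
  have "(\<Sum>j\<le>n. \<bar>T d j\<bar>) \<le> (\<Sum>j\<le>n. \<Sum>i\<le>n. \<bar>d i\<bar> * R i j)"
  proof (intro sum_mono)
    fix j assume "j \<in> {..n}"
    have "\<bar>T d j\<bar> \<le> (\<Sum>i\<le>n. \<bar>d i * R i j\<bar>)" unfolding Td by (rule sum_abs)
    also have "\<dots> = (\<Sum>i\<le>n. \<bar>d i\<bar> * R i j)" using Rnn by (intro sum.cong) (auto simp: abs_mult)
    finally show "\<bar>T d j\<bar> \<le> (\<Sum>i\<le>n. \<bar>d i\<bar> * R i j)" .
  qed
  also have "\<dots> = (\<Sum>i\<le>n. \<bar>d i\<bar> * (\<Sum>j\<le>n. R i j))"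
    by (subst sum.swap) (simp add: sum_distrib_left)
  also have "\<dots> = (\<Sum>i\<le>n. \<bar>d i\<bar> * (1 - dl))"
  proof (intro sum.cong refl)
    fix i assume i: "i \<in> {..n}"
    have "(\<Sum>j\<le>n. R i j) = (\<Sum>j\<le>n. P i j) - (\<Sum>j\<le>n. (if j = 0 then dl else 0))"
      unfolding R_def by (simp add: sum_subtractf)
    also have "\<dots> = 1 - dl" using P_row i by simp
    finally show "\<bar>d i\<bar> * (\<Sum>j\<le>n. R i j) = \<bar>d i\<bar> * (1 - dl)" by simp
  qed
  also have "\<dots> = (1 - dl) * (\<Sum>i\<le>n. \<bar>d i\<bar>)" by (simp add: sum_distrib_left mult.commute)
  finally show ?thesis .
qed

lemma stat_eq:
  assumes "set_pmf \<nu> \<subseteq> {0..n}" "bind_pmf \<nu> (K_step \<alpha> \<beta> n) = \<nu>"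
  shows "pmf \<nu> j = (\<Sum>i\<le>n. pmf \<nu> i * P i j)"
proof -
  have "pmf \<nu> j = pmf (bind_pmf \<nu> (K_step \<alpha> \<beta> n)) j" using assms by simp
  also have "\<dots> = (\<Sum>i\<le>n. P i j * pmf \<nu> i)"
    unfolding pmf_bind using assms(1) by (subst integral_measure_pmf_real[where A="{..n}"]) auto
  finally show ?thesis by (simp add: mult.commute)
qed

lemma stat_unique:
  assumes "set_pmf \<nu>1 \<subseteq> {0..n}" "bind_pmf \<nu>1 (K_step \<alpha> \<beta> n) = \<nu>1"
      and "set_pmf \<nu>2 \<subseteq> {0..n}" "bind_pmf \<nu>2 (K_step \<alpha> \<beta> n) = \<nu>2"
  shows "\<nu>1 = \<nu>2"
proof -
  define d where "d i = pmf \<nu>1 i - pmf \<nu>2 i" for i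
  have s1: "(\<Sum>i\<le>n. pmf \<nu>1 i) = 1" using assms(1) by (intro sum_pmf_eq_1) auto
  have s2: "(\<Sum>i\<le>n. pmf \<nu>2 i) = 1" using assms(3) by (intro sum_pmf_eq_1) auto
  have d0: "(\<Sum>i\<le>n. d i) = 0" unfolding d_def using s1 s2 by (simp add: sum_subtractf)
  have Td: "T d j = d j" for j
    unfolding T_def d_def using stat_eq[OF assms(1,2), of j] stat_eq[OF assms(3,4), of j]
    by (simp add: left_diff_distrib sum_subtractf)
  have "(\<Sum>j\<le>n. \<bar>d j\<bar>) \<le> (1 - dl) * (\<Sum>i\<le>n. \<bar>d i\<bar>)" using contraction[OF d0] Td by simp
  then have "dl * (\<Sum>j\<le>n. \<bar>d j\<bar>) \<le> 0" by (simp add: algebra_simps)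
  moreover have "0 \<le> (\<Sum>j\<le>n. \<bar>d j\<bar>)" by (intro sum_nonneg) auto
  ultimately have "(\<Sum>j\<le>n. \<bar>d j\<bar>) = 0" using dl_pos(1) by (simp add: mult_le_0_iff)
  then have z: "\<And>j. j \<le> n \<Longrightarrow> d j = 0"
    using sum_nonneg_eq_0_iff[of "{..n}" "\<lambda>j. \<bar>d j\<bar>"] by simp
  show ?thesis
  proof (rule pmf_eqI)
    fix j show "pmf \<nu>1 j = pmf \<nu>2 j"
    proof (cases "j \<le> n")
      case True then show ?thesis using z[OF True] unfolding d_def by simp
    next
      case False
      then have "j \<notin> set_pmf \<nu>1" "j \<notin> set_pmf \<nu>2" using assms by auto
      then show ?thesis by (simp add: set_pmf_iff)
    qed
  qed
qed

end


context
  fixes \<alpha> \<beta> :: real and n :: nat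
  assumes a0: "0 \<le> \<alpha>" and a1: "\<alpha> < 1" and b0: "0 < \<beta>" and b1: "\<beta> < 1" and n0: "0 < n"
begin

lemmas ctx = a0 a1 b0 b1 n0

abbreviation "TT \<equiv> T \<alpha> \<beta> n"
abbreviation "dd \<equiv> dl \<alpha> \<beta> n"

definition pit :: "nat \<Rightarrow> nat \<Rightarrow> real" where
  "pit t = (TT ^^ t) (\<lambda>j. if j = 0 then 1 else 0)"

lemma pit_Suc: "pit (Suc t) = TT (pit t)"
  unfolding pit_def by simp

lemma T_nonneg: "(\<And>i. i \<le> n \<Longrightarrow> 0 \<le> v i) \<Longrightarrow> 0 \<le> TT v j"
  unfolding T_def[OF ctx] by (intro sum_nonneg mult_nonneg_nonneg) auto

lemma T_sum: "(\<Sum>j\<le>n. TT v j) = (\<Sum>i\<le>n. v i)"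
proof -
  have "(\<Sum>j\<le>n. TT v j) = (\<Sum>i\<le>n. v i * (\<Sum>j\<le>n. pmf (K_step \<alpha> \<beta> n i) j))"
    unfolding T_def[OF ctx] by (subst sum.swap) (simp add: sum_distrib_left)
  also have "\<dots> = (\<Sum>i\<le>n. v i)" using P_row[OF ctx] by simp
  finally show ?thesis .
qed

lemma T_diff: "TT (\<lambda>j. u j - v j) j = TT u j - TT v j"
  unfolding T_def[OF ctx] by (simp add: left_diff_distrib sum_subtractf)

lemma pit_nonneg: "0 \<le> pit t j"
proof (induction t arbitrary: j)
  case 0 then show ?case by (simp add: pit_def)
next
  case (Suc t) then show ?case unfolding pit_Suc by (intro T_nonneg) auto
qed

lemma pit_sum: "(\<Sum>j\<le>n. pit t j) = 1"
proof (induction t)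
  case 0
  have "(\<Sum>j\<le>n. pit 0 j) = (\<Sum>j\<le>n. (if j = 0 then 1 else 0))" by (simp add: pit_def)
  also have "\<dots> = 1" by (subst sum.delta) auto
  finally show ?case .
next
  case (Suc t)
  then show ?case unfolding pit_Suc T_sum .
qed

definition dt :: "nat \<Rightarrow> nat \<Rightarrow> real" where "dt t j = pit (Suc t) j - pit t j"

lemma dt_sum: "(\<Sum>j\<le>n. dt t j) = 0"
  unfolding dt_def by (simp add: sum_subtractf pit_sum)

lemma dt_Suc: "dt (Suc t) = TT (dt t)"
  unfolding dt_def[abs_def] pit_Suc[of "Suc t"] pit_Suc[of t] by (simp add: T_diff[symmetric])

lemma dt_abs: "(\<Sum>j\<le>n. \<bar>dt t j\<bar>) \<le> 2 * (1 - dd) ^ t"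
proof (induction t)
  case 0
  have "(\<Sum>j\<le>n. \<bar>dt 0 j\<bar>) \<le> (\<Sum>j\<le>n. pit 1 j + pit 0 j)"
    unfolding dt_def using pit_nonneg by (intro sum_mono) (simp add: abs_le_iff)
  also have "\<dots> = 2" using pit_sum[of 1] pit_sum[of 0] by (simp add: sum.distrib)
  finally show ?case by simp
next
  case (Suc t)
  have "(\<Sum>j\<le>n. \<bar>dt (Suc t) j\<bar>) \<le> (1 - dd) * (\<Sum>j\<le>n. \<bar>dt t j\<bar>)"
    unfolding dt_Suc by (rule contraction[OF ctx dt_sum])
  also have "\<dots> \<le> (1 - dd) * (2 * (1 - dd) ^ t)"
    using Suc dl_pos[OF ctx] by (intro mult_left_mono) auto
  finally show ?case by (simp add: algebra_simps)
qed

lemma dt_bound: "j \<le> n \<Longrightarrow> \<bar>dt t j\<bar> \<le> 2 * (1 - dd) ^ t"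
proof -
  assume j: "j \<le> n"
  have "\<bar>dt t j\<bar> \<le> (\<Sum>j\<le>n. \<bar>dt t j\<bar>)" by (rule member_le_sum) (use j in auto)
  then show ?thesis using dt_abs[of t] by linarith
qed

lemma dt_summable: "j \<le> n \<Longrightarrow> summable (\<lambda>t. dt t j)"
proof -
  assume j: "j \<le> n"
  have "summable (\<lambda>t. 2 * (1 - dd) ^ t)"
    using dl_pos[OF ctx] by (intro summable_mult summable_geometric) auto
  then show ?thesis
    by (rule summable_comparison_test[rotated]) (use dt_bound[OF j] in auto)
qed

lemma pit_tele: "pit t j = pit 0 j + (\<Sum>r<t. dt r j)"
  by (induction t) (simp_all add: dt_def)

definition pil :: "nat \<Rightarrow> real" where "pil j = pit 0 j + (\<Sum>r. dt r j)"

lemma pit_lim: "j \<le> n \<Longrightarrow> (\<lambda>t. pit t j) \<longlonglongrightarrow> pil j"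
proof -
  assume j: "j \<le> n"
  have e: "(\<lambda>t. pit t j) = (\<lambda>t. pit 0 j + (\<Sum>r<t. dt r j))" by (rule ext) (rule pit_tele)
  show ?thesis unfolding pil_def e
    by (intro tendsto_add tendsto_const summable_LIMSEQ dt_summable j)
qed

lemma pil_nonneg: "j \<le> n \<Longrightarrow> 0 \<le> pil j"
proof -
  assume j: "j \<le> n"
  show ?thesis
  proof (rule LIMSEQ_le_const[OF pit_lim[OF j]])
    show "\<exists>N. \<forall>t\<ge>N. 0 \<le> pit t j" using pit_nonneg by simp
  qed
qed

lemma pil_sum: "(\<Sum>j\<le>n. pil j) = 1"
proof -
  have "(\<lambda>t. \<Sum>j\<le>n. pit t j) \<longlonglongrightarrow> (\<Sum>j\<le>n. pil j)"
    by (intro tendsto_sum pit_lim) auto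
  then have "(\<lambda>t. 1::real) \<longlonglongrightarrow> (\<Sum>j\<le>n. pil j)" unfolding pit_sum .
  from LIMSEQ_unique[OF this tendsto_const] show ?thesis by simp
qed

lemma pil_stat: "j \<le> n \<Longrightarrow> (\<Sum>i\<le>n. pil i * pmf (K_step \<alpha> \<beta> n i) j) = pil j"
proof -
  assume j: "j \<le> n"
  have "(\<lambda>t. pit (Suc t) j) \<longlonglongrightarrow> pil j" using pit_lim[OF j] by (rule LIMSEQ_Suc)
  moreover have "(\<lambda>t. pit (Suc t) j) \<longlonglongrightarrow> (\<Sum>i\<le>n. pil i * pmf (K_step \<alpha> \<beta> n i) j)"
    unfolding pit_Suc T_def[OF ctx] by (intro tendsto_sum tendsto_mult_right pit_lim) auto
  ultimately show ?thesis by (rule LIMSEQ_unique[rotated])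
qed

definition fpi :: "nat \<Rightarrow> real" where "fpi j = (if j \<le> n then pil j else 0)"

lemma fpi_nonneg: "0 \<le> fpi j" unfolding fpi_def using pil_nonneg by auto

lemma fpi_int: "(\<integral>\<^sup>+x. ennreal (fpi x) \<partial>count_space UNIV) = 1"
proof -
  have "(\<integral>\<^sup>+x. ennreal (fpi x) \<partial>count_space UNIV) = (\<Sum>x\<le>n. ennreal (fpi x))"
    by (rule nn_integral_count_space') (auto simp: fpi_def)
  also have "\<dots> = ennreal (\<Sum>x\<le>n. fpi x)" using fpi_nonneg by (simp add: sum_ennreal)
  also have "(\<Sum>x\<le>n. fpi x) = 1" using pil_sum by (simp add: fpi_def)
  finally show ?thesis by simp
qed

definition "nu = embed_pmf fpi"

lemma pmf_nu: "pmf nu j = fpi j"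
  unfolding nu_def using fpi_nonneg fpi_int by (simp add: pmf_embed_pmf)

lemma nu_set: "set_pmf nu \<subseteq> {0..n}"
proof
  fix x assume "x \<in> set_pmf nu"
  then have "fpi x \<noteq> 0" by (simp add: set_pmf_iff pmf_nu)
  then show "x \<in> {0..n}" unfolding fpi_def by (auto split: if_splits)
qed

lemma nu_stat: "bind_pmf nu (K_step \<alpha> \<beta> n) = nu"
proof (rule pmf_eqI)
  fix j
  have "pmf (bind_pmf nu (K_step \<alpha> \<beta> n)) j = (\<Sum>i\<le>n. pmf (K_step \<alpha> \<beta> n i) j * pmf nu i)"
    unfolding pmf_bind using nu_set by (subst integral_measure_pmf_real[where A="{..n}"]) auto
  also have "\<dots> = (\<Sum>i\<le>n. pil i * pmf (K_step \<alpha> \<beta> n i) j)"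
    by (intro sum.cong) (auto simp: pmf_nu fpi_def)
  also have "\<dots> = pmf nu j"
  proof (cases "j \<le> n")
    case True then show ?thesis using pil_stat[OF True] by (simp add: pmf_nu fpi_def)
  next
    case False
    then show ?thesis using P_supp[OF ctx] by (simp add: pmf_nu fpi_def)
  qed
  finally show "pmf (bind_pmf nu (K_step \<alpha> \<beta> n)) j = pmf nu j" .
qed

lemma K_stat_props:
  "set_pmf (K_stat \<alpha> \<beta> n) \<subseteq> {0..n} \<and> bind_pmf (K_stat \<alpha> \<beta> n) (K_step \<alpha> \<beta> n) = K_stat \<alpha> \<beta> n"
proof -
  have "K_stat \<alpha> \<beta> n = nu"
    unfolding K_stat_def
  proof (rule the_equality)
    show "set_pmf nu \<subseteq> {0..n} \<and> bind_pmf nu (K_step \<alpha> \<beta> n) = nu" using nu_set nu_stat by simp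
    fix \<nu> assume "set_pmf \<nu> \<subseteq> {0..n} \<and> bind_pmf \<nu> (K_step \<alpha> \<beta> n) = \<nu>"
    then show "\<nu> = nu" using stat_unique[OF ctx, of \<nu> nu] nu_set nu_stat by blast
  qed
  then show ?thesis using nu_set nu_stat by simp
qed

end


lemma summ_E:
  assumes "0 < S" "S < 1"
  shows "summable (\<lambda>i. (real i + 2) * S ^ i)"
proof -
  define r where "r = sqrt S"
  have r: "0 < r" "r < 1" "r * r = S" using assms unfolding r_def by auto
  have "(\<lambda>i. of_nat i * r ^ i) \<longlonglongrightarrow> 0" using r by (intro powser_times_n_limit_0) auto
  then have ev: "eventually (\<lambda>i. real i * r ^ i < 1) sequentially"
    by (rule order_tendstoD(2)) simp
  have "eventually (\<lambda>i. norm ((real i + 2) * S ^ i) \<le> r ^ i + 2 * S ^ i) sequentially"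
    using ev
  proof eventually_elim
    case (elim i)
    have Si: "S ^ i = r ^ i * r ^ i" using r by (simp add: power_mult_distrib[symmetric])
    have "(real i + 2) * S ^ i = (real i * r ^ i) * r ^ i + 2 * S ^ i" unfolding Si by (simp add: algebra_simps)
    also have "\<dots> \<le> 1 * r ^ i + 2 * S ^ i" using elim r by (intro add_right_mono mult_right_mono) auto
    finally show ?case using assms by simp
  qed
  moreover have "summable (\<lambda>i. r ^ i + 2 * S ^ i)"
    using r assms by (intro summable_add summable_mult summable_geometric) auto
  ultimately show ?thesis by (rule summable_comparison_test_ev)
qed

context
  fixes \<alpha> \<beta> :: real and n :: nat
  assumes a0: "0 \<le> \<alpha>" and a1: "\<alpha> < 1" and b0: "0 < \<beta>" and b1: "\<beta> < 1" and n0: "0 < n"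
begin

lemmas ctx8 = a0 a1 b0 b1 n0

abbreviation "pp i j \<equiv> pmf (K_step \<alpha> \<beta> n i) j"
abbreviation "v j \<equiv> pmf (K_stat \<alpha> \<beta> n) j"
definition "dk k = 1 - pp k k - pp k (Suc k)"
definition "ak i = pp i (Suc i)"

lemma v_stat: "v j = (\<Sum>i\<le>n. v i * pp i j)"
  using stat_eq[OF ctx8] K_stat_props[OF ctx8] by blast

lemma v_set: "set_pmf (K_stat \<alpha> \<beta> n) \<subseteq> {0..n}"
  using K_stat_props[OF ctx8] by blast

lemma v_sum: "(\<Sum>i\<le>n. v i) = 1"
  using v_set by (intro sum_pmf_eq_1) auto

lemma v_le1: "v j \<le> 1" by (rule pmf_le_1)

lemma C1: "i < j \<Longrightarrow> (\<Sum>j'\<le>j. pp i j') = 1"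
  using K_support[of \<beta> \<alpha> n i] b0 b1 by (intro sum_pmf_eq_1) auto

lemma sum_atMost_last: "(\<Sum>i\<le>(j::nat). f i) = (\<Sum>i<j. f i) + (f j :: real)"
  unfolding lessThan_Suc_atMost[symmetric] by (rule sum.lessThan_Suc)

lemma C2: "(\<Sum>j'\<le>j. pp j j') = 1 - pp j (Suc j)"
  using PK_one[of \<beta> \<alpha> n j] b0 b1 by simp

lemma C3: "(\<Sum>j'\<le>j. pp (Suc j) j') = dk (Suc j)"
  using PK_one[of \<beta> \<alpha> n "Suc j"] b0 b1 unfolding dk_def by simp

lemma flow:
  assumes j: "j < n"
  shows "v (Suc j) * dk (Suc j) \<le> v j * ak j"
proof -
  define C where "C i = (\<Sum>j'\<le>j. pp i j')" for i
  have Cnn: "0 \<le> C i" for i unfolding C_def by (intro sum_nonneg) auto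
  have split: "(\<Sum>i\<le>n. g i) = (\<Sum>i\<le>j. g i) + (\<Sum>i\<in>{Suc j..n}. g i)" for g :: "nat \<Rightarrow> real"
  proof -
    have U: "{..n} = {..j} \<union> {Suc j..n}" using j by auto
    show ?thesis unfolding U by (rule sum.union_disjoint) auto
  qed
  have "(\<Sum>j'\<le>j. v j') = (\<Sum>j'\<le>j. \<Sum>i\<le>n. v i * pp i j')"
    by (intro sum.cong refl v_stat)
  also have "\<dots> = (\<Sum>i\<le>n. v i * C i)"
    unfolding C_def by (subst sum.swap) (simp add: sum_distrib_left)
  also have "\<dots> = (\<Sum>i\<le>j. v i * C i) + (\<Sum>i\<in>{Suc j..n}. v i * C i)"
    by (rule split)
  also have "(\<Sum>i\<le>j. v i * C i) = (\<Sum>i<j. v i) + v j * (1 - ak j)"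
  proof -
    have "(\<Sum>i<j. v i * C i) = (\<Sum>i<j. v i)"
      by (intro sum.cong refl) (simp add: C_def C1)
    then show ?thesis unfolding sum_atMost_last[of "\<lambda>i. v i * C i"] by (simp add: C_def C2 ak_def)
  qed
  finally have eq: "v j * ak j = (\<Sum>i\<in>{Suc j..n}. v i * C i)"
    unfolding sum_atMost_last[of v] by (simp add: algebra_simps)
  have le: "v (Suc j) * C (Suc j) \<le> (\<Sum>i\<in>{Suc j..n}. v i * C i)"
    by (rule member_le_sum) (use j Cnn in auto)
  have c: "C (Suc j) = dk (Suc j)" unfolding C_def by (rule C3)
  show ?thesis using le[unfolded c] eq by linarith
qed

lemma v0: "dl \<alpha> \<beta> n \<le> v 0"
proof -
  have "(\<Sum>i\<le>n. v i * dl \<alpha> \<beta> n) \<le> (\<Sum>i\<le>n. v i * pp i 0)"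
    using P0[OF ctx8] by (intro sum_mono mult_left_mono) auto
  moreover have "(\<Sum>i\<le>n. v i * dl \<alpha> \<beta> n) = dl \<alpha> \<beta> n"
    using v_sum by (simp add: sum_distrib_right[symmetric])
  ultimately show ?thesis using v_stat[of 0] by linarith
qed

lemma v_lower: "j < n \<Longrightarrow> v j * ak j \<le> v (Suc j)"
proof -
  assume j: "j < n"
  have "v j * pp j (Suc j) \<le> (\<Sum>i\<le>n. v i * pp i (Suc j))"
    by (rule member_le_sum) (use j in auto)
  then show ?thesis using v_stat[of "Suc j"] unfolding ak_def by linarith
qed

lemma ak_eq: "i \<le> n \<Longrightarrow> ak i = (1 - real i / real n) * ((1-\<alpha>)*(1-\<beta>)) * (1-\<beta>) ^ i"
  unfolding ak_def using aK[OF ctx8] by simp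

lemma ak_pos: "i < n \<Longrightarrow> 0 < ak i"
proof -
  assume i: "i < n"
  have "real i / real n < 1" using i n0 by simp
  moreover have "0 < (1-\<alpha>)*(1-\<beta>)" using a1 b1 by simp
  moreover have "0 < (1-\<beta>) ^ i" using b1 by simp
  ultimately show ?thesis unfolding ak_eq[OF less_imp_le[OF i]] by simp
qed

lemma ak_nonneg: "0 \<le> ak i" unfolding ak_def by simp

lemma v_pos: "j < n \<Longrightarrow> 0 < v j"
proof (induction j)
  case 0 then show ?case using v0 dl_pos[OF ctx8] by linarith
next
  case (Suc j)
  then have "0 < v j * ak j" using ak_pos by simp
  then show ?case using v_lower[of j] Suc by linarith
qed

lemma dk_bounds: "1 \<le> k \<Longrightarrow> k \<le> n \<Longrightarrow> \<beta>^2 \<le> dk k \<and> 1 - dk k \<le> real (Suc k) * (1-\<beta>) ^ (k - 1)"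
  using topK[OF ctx8] unfolding dk_def by (simp add: algebra_simps)

lemma dk_pos: "1 \<le> k \<Longrightarrow> k \<le> n \<Longrightarrow> 0 < dk k"
proof -
  assume k: "1 \<le> k" "k \<le> n"
  have "0 < \<beta>^2" using b0 by simp
  then show ?thesis using dk_bounds[OF k] by linarith
qed

lemma dk_le1: "dk k \<le> 1" unfolding dk_def
  using pmf_nonneg[of "K_step \<alpha> \<beta> n k" k] pmf_nonneg[of "K_step \<alpha> \<beta> n k" "Suc k"] by linarith

lemma v_upper: "j < n \<Longrightarrow> v j * (\<Prod>i<j. dk (Suc i)) \<le> (\<Prod>i<j. ak i)"
proof (induction j)
  case 0 then show ?case using v_le1 by simp
next
  case (Suc j)
  have pd: "0 \<le> (\<Prod>i<j. dk (Suc i))" using Suc.prems dk_pos by (intro prod_nonneg) (auto intro: less_imp_le)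
  have "v (Suc j) * (\<Prod>i<Suc j. dk (Suc i)) = (v (Suc j) * dk (Suc j)) * (\<Prod>i<j. dk (Suc i))"
    by (simp add: algebra_simps)
  also have "\<dots> \<le> (v j * ak j) * (\<Prod>i<j. dk (Suc i))"
    using flow[of j] Suc.prems pd by (intro mult_right_mono) auto
  also have "\<dots> = ak j * (v j * (\<Prod>i<j. dk (Suc i)))" by (simp add: algebra_simps)
  also have "\<dots> \<le> ak j * (\<Prod>i<j. ak i)"
    using Suc ak_nonneg by (intro mult_left_mono) auto
  finally show ?case by (simp add: algebra_simps)
qed

lemma mu_eq: "cc_mu \<alpha> \<beta> n = v (n - 1) * ak (n - 1)"
proof -
  have "{..<n} = insert (n - 1) {..<n - 1}" using n0 by auto
  then have "cc_mu \<alpha> \<beta> n = v (n - 1) * pp (n - 1) n + (\<Sum>k<n - 1. v k * pp k n)"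
    unfolding cc_mu_def by simp
  also have "(\<Sum>k<n - 1. v k * pp k n) = 0"
  proof (intro sum.neutral ballI)
    fix k assume "k \<in> {..<n - 1}"
    then have "n \<notin> set_pmf (K_step \<alpha> \<beta> n k)" using K_support[of \<beta> \<alpha> n k] b0 b1 by auto
    then show "v k * pp k n = 0" by (simp add: set_pmf_iff)
  qed
  finally show ?thesis unfolding ak_def using n0 by simp
qed

lemma mu_pos: "0 < cc_mu \<alpha> \<beta> n"
  unfolding mu_eq using v_pos[of "n-1"] ak_pos[of "n-1"] n0 by simp

definition "Eb = (\<Sum>i. (real i + 2) * (1-\<beta>) ^ i)"

lemma dk_exp: "1 \<le> k \<Longrightarrow> k \<le> n \<Longrightarrow> exp (- (real (Suc k) * (1-\<beta>) ^ (k - 1)) / \<beta>^2) \<le> dk k"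
proof -
  assume k: "1 \<le> k" "k \<le> n"
  have d: "0 < dk k" "\<beta>^2 \<le> dk k" "1 - dk k \<le> real (Suc k) * (1-\<beta>) ^ (k - 1)"
    using dk_bounds[OF k] dk_pos[OF k] by auto
  have "ln (1 / dk k) \<le> 1 / dk k - 1" using d by (intro ln_le_minus_one) auto
  then have "- ln (dk k) \<le> (1 - dk k) / dk k" using d by (simp add: ln_div field_simps)
  also have "\<dots> \<le> (1 - dk k) / \<beta>^2"
    using d b0 dk_le1[of k] by (intro divide_left_mono) auto
  also have "\<dots> \<le> real (Suc k) * (1-\<beta>) ^ (k - 1) / \<beta>^2" using d b0 by (intro divide_right_mono) auto
  finally have "- (real (Suc k) * (1-\<beta>) ^ (k - 1)) / \<beta>^2 \<le> ln (dk k)" by simp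
  then have "exp (- (real (Suc k) * (1-\<beta>) ^ (k - 1)) / \<beta>^2) \<le> exp (ln (dk k))" by simp
  then show ?thesis using d by simp
qed

lemma prod_dk: "exp (- Eb / \<beta>^2) \<le> (\<Prod>i<n - 1. dk (Suc i))"
proof -
  have "(\<Prod>i<n - 1. exp (- (real (Suc (Suc i)) * (1-\<beta>) ^ i) / \<beta>^2)) \<le> (\<Prod>i<n - 1. dk (Suc i))"
  proof (intro prod_mono conjI)
    fix i assume "i \<in> {..<n - 1}"
    then have "1 \<le> Suc i" "Suc i \<le> n" by auto
    from dk_exp[OF this] show "exp (- (real (Suc (Suc i)) * (1-\<beta>) ^ i) / \<beta>^2) \<le> dk (Suc i)" by simp
  qed simp
  moreover have "(\<Prod>i<n - 1. exp (- (real (Suc (Suc i)) * (1-\<beta>) ^ i) / \<beta>^2))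
      = exp (- (\<Sum>i<n - 1. (real i + 2) * (1-\<beta>) ^ i) / \<beta>^2)"
  proof -
    have "(\<Prod>i<n - 1. exp (- (real (Suc (Suc i)) * (1-\<beta>) ^ i) / \<beta>^2))
        = exp (\<Sum>i<n - 1. - (real (Suc (Suc i)) * (1-\<beta>) ^ i) / \<beta>^2)"
      by (rule exp_sum[symmetric]) simp
    also have "(\<Sum>i<n - 1. - (real (Suc (Suc i)) * (1-\<beta>) ^ i) / \<beta>^2)
        = - (\<Sum>i<n - 1. (real i + 2) * (1-\<beta>) ^ i) / \<beta>^2"
      by (simp add: sum_negf sum_divide_distrib[symmetric] add.commute)
    finally show ?thesis .
  qed
  moreover have "(\<Sum>i<n - 1. (real i + 2) * (1-\<beta>) ^ i) \<le> Eb"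
    unfolding Eb_def using summ_E[of "1-\<beta>"] b0 b1 by (intro sum_le_suminf) auto
  then have "exp (- Eb / \<beta>^2) \<le> exp (- (\<Sum>i<n - 1. (real i + 2) * (1-\<beta>) ^ i) / \<beta>^2)"
    using b0 by (simp add: divide_right_mono)
  ultimately show ?thesis by linarith
qed

lemma mu_upper: "cc_mu \<alpha> \<beta> n \<le> (\<Prod>i<n. ak i) * exp (Eb / \<beta>^2)"
proof -
  define D where "D = (\<Prod>i<n - 1. dk (Suc i))"
  have Dpos: "0 < D" using prod_dk exp_gt_zero[of "- Eb / \<beta>^2"] unfolding D_def by linarith
  have "v (n - 1) * D \<le> (\<Prod>i<n - 1. ak i)" using v_upper[of "n-1"] n0 unfolding D_def by simp
  then have "v (n - 1) \<le> (\<Prod>i<n - 1. ak i) / D" using Dpos by (simp add: field_simps)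
  also have "\<dots> \<le> (\<Prod>i<n - 1. ak i) * exp (Eb / \<beta>^2)"
  proof -
    have "1 / D \<le> 1 / exp (- (Eb / \<beta>^2))"
      using prod_dk Dpos unfolding D_def[symmetric] by (intro divide_left_mono) auto
    moreover have "1 / exp (- (Eb / \<beta>^2)) = exp (Eb / \<beta>^2)" by (simp add: exp_minus field_simps)
    ultimately have i: "1 / D \<le> exp (Eb / \<beta>^2)" by simp
    have "(\<Prod>i<n - 1. ak i) / D = (\<Prod>i<n - 1. ak i) * (1 / D)" by simp
    also have "\<dots> \<le> (\<Prod>i<n - 1. ak i) * exp (Eb / \<beta>^2)"
      using i ak_nonneg by (intro mult_left_mono prod_nonneg) auto
    finally show ?thesis .
  qed
  finally have vb: "v (n - 1) \<le> (\<Prod>i<n - 1. ak i) * exp (Eb / \<beta>^2)" .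
  have "cc_mu \<alpha> \<beta> n = v (n - 1) * ak (n - 1)" by (rule mu_eq)
  also have "\<dots> \<le> (\<Prod>i<n - 1. ak i) * exp (Eb / \<beta>^2) * ak (n - 1)"
    using vb ak_nonneg by (intro mult_right_mono) auto
  also have "(\<Prod>i<n. ak i) = (\<Prod>i<n - 1. ak i) * ak (n - 1)"
    using n0 by (metis Suc_diff_1 prod.lessThan_Suc)
  ultimately show ?thesis by (simp add: algebra_simps)
qed

end


primrec ku :: "real \<Rightarrow> real \<Rightarrow> nat \<Rightarrow> nat \<Rightarrow> nat \<Rightarrow> real" where
  "ku \<alpha> \<beta> n 0 k = (if k = 0 then 1 else 0)"
| "ku \<alpha> \<beta> n (Suc s) k = (if k = n then 0 else PK \<alpha> \<beta> n (ku \<alpha> \<beta> n s) k)"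

primrec fu :: "real \<Rightarrow> real \<Rightarrow> nat \<Rightarrow> nat \<Rightarrow> nat \<Rightarrow> real" where
  "fu \<alpha> \<beta> n 0 k = (if k = 0 then 1 else 0)"
| "fu \<alpha> \<beta> n (Suc s) k = PK \<alpha> \<beta> n (fu \<alpha> \<beta> n s) k"

lemma PK_sum: "PK \<alpha> \<beta> n (\<lambda>j. \<Sum>s\<in>A. f s j) k = (\<Sum>s\<in>A. PK \<alpha> \<beta> n (f s) k)"
  unfolding PK_def by (simp add: sum_distrib_left sum.swap[of _ A])

context
  fixes \<alpha> \<beta> :: real and n :: nat
  assumes a0: "0 \<le> \<alpha>" and a1: "\<alpha> < 1" and b0: "0 < \<beta>" and b1: "\<beta> < 1" and n0: "0 < n"
begin

lemmas ctx9 = a0 a1 b0 b1 n0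

abbreviation "PKn \<equiv> PK \<alpha> \<beta> n"
abbreviation "F \<equiv> Fs \<alpha> \<beta> n"

lemma PK_mono':
  assumes k: "k \<le> n" and fg: "\<And>j. j \<le> n \<Longrightarrow> f j \<le> g j"
  shows "PKn f k \<le> PKn g k"
  unfolding PK_def
proof (intro sum_mono)
  fix j assume "j \<in> {..Suc k}"
  show "pmf (K_step \<alpha> \<beta> n k) j * f j \<le> pmf (K_step \<alpha> \<beta> n k) j * g j"
  proof (cases "j \<le> n")
    case True then show ?thesis using fg by (intro mult_left_mono) auto
  next
    case False then show ?thesis using P_supp[OF ctx9 k, of j] by simp
  qed
qed

lemma PKc: "PKn (\<lambda>j. c) k = c" using PK_const[of \<beta>] b0 b1 by simp

lemma F_bounds: "k \<le> n \<Longrightarrow> 0 \<le> F m k \<and> F m k \<le> 1"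
proof (induction m arbitrary: k)
  case 0 then show ?case by simp
next
  case (Suc m)
  show ?case
  proof (cases "k = n")
    case False
    have "PKn (\<lambda>j. 0) k \<le> PKn (F m) k" using Suc by (intro PK_mono') auto
    moreover have "PKn (F m) k \<le> PKn (\<lambda>j. 1) k" using Suc by (intro PK_mono') auto
    ultimately show ?thesis using False by (simp add: PKc)
  qed simp
qed

lemma F_anti_Suc: "k \<le> n \<Longrightarrow> F (Suc m) k \<le> F m k"
proof (induction m arbitrary: k)
  case 0
  have "PKn (F 0) k \<le> PKn (\<lambda>j. 1) k" using 0 by (intro PK_mono') auto
  then show ?case by (simp add: PKc)
next
  case (Suc m)
  show ?case
  proof (cases "k = n")
    case False
    have "PKn (F (Suc m)) k \<le> PKn (F m) k" using Suc by (intro PK_mono') auto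
    then show ?thesis using False by simp
  qed simp
qed

lemma F_anti: "m \<le> m' \<Longrightarrow> k \<le> n \<Longrightarrow> F m' k \<le> F m k"
proof (induction m' rule: dec_induct)
  case base then show ?case by simp
next
  case (step m') then show ?case using F_anti_Suc[of k m'] by simp
qed

lemma subsol:
  assumes H0: "\<And>k. k \<le> n \<Longrightarrow> h 0 k \<le> (if k = n then 1 else 0)"
      and Hn: "\<And>m. h m n \<le> 1"
      and Hs: "\<And>m k. k < n \<Longrightarrow> h (Suc m) k \<le> PKn (h m) k"
  shows "k \<le> n \<Longrightarrow> h m k \<le> 1 - F m k"
proof (induction m arbitrary: k)
  case 0 then show ?case using H0[of k] by (cases "k = n") auto
next
  case (Suc m)
  show ?case
  proof (cases "k = n")
    case True then show ?thesis using Hn by simp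
  next
    case False
    then have k: "k < n" using Suc by simp
    have "h (Suc m) k \<le> PKn (h m) k" using Hs[OF k] .
    also have "\<dots> \<le> PKn (\<lambda>j. 1 - F m j) k" using Suc by (intro PK_mono') auto
    also have "\<dots> = 1 - PKn (F m) k" unfolding PK_diff PKc ..
    finally show ?thesis using False by simp
  qed
qed

abbreviation "ak' \<equiv> ak \<alpha> \<beta> n"
definition "Aall = (\<Prod>i<n. ak' i)"

lemma ak'_def2: "ak' i = pmf (K_step \<alpha> \<beta> n i) (Suc i)"
  using ak_def[OF ctx9] by simp

definition w :: "nat \<Rightarrow> nat \<Rightarrow> real" where
  "w r k = (if 1 \<le> k \<and> n \<le> r + k then (\<Prod>i\<in>{k..<n}. ak' i) else 0)"

lemma w_nonneg: "0 \<le> w r k"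
  unfolding w_def using ak_nonneg[OF ctx9] by (auto intro: prod_nonneg)

lemma w_n: "w r n = 1" unfolding w_def using n0 by simp

lemma w_step: "1 \<le> k \<Longrightarrow> k < n \<Longrightarrow> w (Suc r) k = ak' k * w r (Suc k)"
  unfolding w_def by (simp add: prod.atLeast_Suc_lessThan)

lemma w_step0: "n \<le> Suc r \<Longrightarrow> ak' 0 * w r 1 = Aall"
proof -
  assume r: "n \<le> Suc r"
  have "ak' 0 * w r 1 = ak' 0 * (\<Prod>i\<in>{1..<n}. ak' i)" unfolding w_def using r by simp
  also have "\<dots> = (\<Prod>i\<in>{0..<n}. ak' i)" using n0 by (simp add: prod.atLeast_Suc_lessThan)
  finally show ?thesis unfolding Aall_def by (simp add: atLeast0LessThan)
qed

lemma w0: "k \<le> n \<Longrightarrow> w 0 k = (if k = n then 1 else 0)"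
  unfolding w_def using n0 by auto

definition ind :: "nat \<Rightarrow> nat \<Rightarrow> real" where
  "ind r s = (if n \<le> r - s \<and> r - s < 2 * n then 1 else 0)"

definition cc :: "nat \<Rightarrow> nat \<Rightarrow> real" where
  "cc r k = Aall * (\<Sum>s<r. ind r s * ku \<alpha> \<beta> n s k)"

lemma ku_n: "ku \<alpha> \<beta> n s n = 0"
  using n0 by (cases s) auto

lemma cc_n: "cc r n = 0" unfolding cc_def by (simp add: ku_n)

lemma cc_0: "cc 0 k = 0" unfolding cc_def by simp

lemma cc_step: "k < n \<Longrightarrow> cc (Suc r) k = Aall * ind (Suc r) 0 * (if k = 0 then 1 else 0) + PKn (cc r) k"
proof -
  assume k: "k < n"
  have "(\<Sum>s<Suc r. ind (Suc r) s * ku \<alpha> \<beta> n s k)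
     = ind (Suc r) 0 * ku \<alpha> \<beta> n 0 k + (\<Sum>s<r. ind (Suc r) (Suc s) * ku \<alpha> \<beta> n (Suc s) k)"
    by (subst sum.lessThan_Suc_shift) simp
  also have "(\<Sum>s<r. ind (Suc r) (Suc s) * ku \<alpha> \<beta> n (Suc s) k) = (\<Sum>s<r. PKn (\<lambda>j. ind r s * ku \<alpha> \<beta> n s j) k)"
    using k by (intro sum.cong refl) (simp add: ind_def PK_scale)
  also have "\<dots> = PKn (\<lambda>j. \<Sum>s<r. ind r s * ku \<alpha> \<beta> n s j) k" by (rule PK_sum[symmetric])
  finally have "cc (Suc r) k = Aall * (ind (Suc r) 0 * ku \<alpha> \<beta> n 0 k) + Aall * PKn (\<lambda>j. \<Sum>s<r. ind r s * ku \<alpha> \<beta> n s j) k"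
    unfolding cc_def by (simp add: algebra_simps)
  also have "Aall * PKn (\<lambda>j. \<Sum>s<r. ind r s * ku \<alpha> \<beta> n s j) k = PKn (cc r) k"
    unfolding cc_def by (rule PK_scale[symmetric])
  finally show ?thesis by simp
qed

lemma Aall_nonneg: "0 \<le> Aall" unfolding Aall_def using ak_nonneg[OF ctx9] by (auto intro: prod_nonneg)

lemma cc_le_g: "k \<le> n \<Longrightarrow> cc m k \<le> 1 - F m k"
proof -
  assume k: "k \<le> n"
  define h where "h r j = cc r j + w r j" for r j
  have "h m k \<le> 1 - F m k"
  proof (rule subsol[OF _ _ _ k])
    fix k assume "k \<le> n" then show "h 0 k \<le> (if k = n then 1 else 0)" unfolding h_def cc_0 w0[OF \<open>k \<le> n\<close>] by simp
  next
    fix m show "h m n \<le> 1" unfolding h_def cc_n w_n by simp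
  next
    fix m k assume k: "k < n"
    have ge: "ak' k * w m (Suc k) \<le> PKn (w m) k"
      unfolding ak'_def2 by (rule PK_ge_single) (auto simp: w_nonneg)
    have "PKn (h m) k = PKn (cc m) k + PKn (w m) k" unfolding h_def[abs_def] by (rule PK_add)
    moreover have "Aall * ind (Suc m) 0 * (if k = 0 then 1 else 0) + w (Suc m) k \<le> ak' k * w m (Suc k)"
    proof (cases "k = 0")
      case True
      have "w (Suc m) 0 = 0" unfolding w_def by simp
      moreover have "Aall * ind (Suc m) 0 \<le> ak' 0 * w m 1"
      proof (cases "n \<le> Suc m")
        case True then show ?thesis using w_step0 Aall_nonneg by (simp add: ind_def)
      next
        case False then show ?thesis using w_nonneg ak_nonneg[OF ctx9] by (simp add: ind_def)
      qed
      ultimately show ?thesis using True by simp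
    next
      case False
      then show ?thesis using w_step[of k m] k by simp
    qed
    ultimately show "h (Suc m) k \<le> PKn (h m) k" unfolding h_def using cc_step[OF k] ge by simp
  qed
  then show ?thesis unfolding h_def using w_nonneg[of m k] by simp
qed

lemma fu_bounds: "k \<le> n \<Longrightarrow> 0 \<le> fu \<alpha> \<beta> n s k \<and> fu \<alpha> \<beta> n s k \<le> 1"
proof (induction s arbitrary: k)
  case 0 then show ?case by simp
next
  case (Suc s)
  have "PKn (\<lambda>j. 0) k \<le> PKn (fu \<alpha> \<beta> n s) k" using Suc by (intro PK_mono') auto
  moreover have "PKn (fu \<alpha> \<beta> n s) k \<le> PKn (\<lambda>j. 1) k" using Suc by (intro PK_mono') auto
  ultimately show ?case by (simp add: PKc)
qed

lemma fu_ku: "k \<le> n \<Longrightarrow> fu \<alpha> \<beta> n s k - ku \<alpha> \<beta> n s k \<le> 1 - F s k"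
proof (induction s arbitrary: k)
  case 0 then show ?case by simp
next
  case (Suc s)
  show ?case
  proof (cases "k = n")
    case True then show ?thesis using fu_bounds[of k "Suc s"] Suc by simp
  next
    case False
    have "fu \<alpha> \<beta> n (Suc s) k - ku \<alpha> \<beta> n (Suc s) k = PKn (\<lambda>j. fu \<alpha> \<beta> n s j - ku \<alpha> \<beta> n s j) k"
      using False by (simp add: PK_diff)
    also have "\<dots> \<le> PKn (\<lambda>j. 1 - F s j) k" using Suc by (intro PK_mono') auto
    also have "\<dots> = 1 - F (Suc s) k" using False by (simp add: PK_diff PKc)
    finally show ?thesis .
  qed
qed

end


context
  fixes \<alpha> \<beta> :: real and n :: nat
  assumes a0: "0 \<le> \<alpha>" and a1: "\<alpha> < 1" and b0: "0 < \<beta>" and b1: "\<beta> < 1" and n0: "0 < n"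
begin

lemmas ctx10 = a0 a1 b0 b1 n0

definition "qq = (1-\<alpha>)*(1-\<beta>)"
definition "MM = nat \<lceil>2 * (1 + 1/\<beta>)\<rceil>"
definition "aa = (1 - qq) * \<beta> ^ MM"
definition "VV t j = (1-\<beta>) ^ t * real j + qq * (\<Sum>i<t. (1-\<beta>) ^ i)"

lemma qq_b: "0 \<le> qq" "qq \<le> 1" "qq < 1"
proof -
  have h: "(1-\<alpha>)*(1-\<beta>) \<le> (1-\<beta>)" using a0 a1 b0 b1 by (intro mult_left_le_one_le) auto
  have h0: "0 \<le> (1-\<alpha>)*(1-\<beta>)" using a1 b1 by simp
  show "0 \<le> qq" using h0 unfolding qq_def .
  show "qq \<le> 1" using h b0 unfolding qq_def by linarith
  show "qq < 1" using h b0 unfolding qq_def by linarith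
qed

lemma MM_b: "2 * (1 + 1/\<beta>) \<le> real MM" "0 < MM"
proof -
  have "2 * (1 + 1/\<beta>) \<le> real_of_int \<lceil>2 * (1 + 1/\<beta>)\<rceil>" by (rule le_of_int_ceiling)
  moreover have "0 < 2 * (1 + 1/\<beta>)" using b0 by (simp add: add_pos_pos)
  ultimately show "2 * (1 + 1/\<beta>) \<le> real MM" "0 < MM" unfolding MM_def by linarith+
qed

lemma aa_pos: "0 < aa" unfolding aa_def using qq_b b0 by simp

lemma fu1: "fu \<alpha> \<beta> n (Suc 0) k = pmf (K_step \<alpha> \<beta> n k) 0"
proof -
  have "(\<lambda>j. pmf (K_step \<alpha> \<beta> n k) j * (if j = 0 then 1 else 0)) = (\<lambda>j. if j = 0 then pmf (K_step \<alpha> \<beta> n k) 0 else 0)"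
    by auto
  then show ?thesis unfolding fu.simps PK_def by (simp only:) (simp add: sum.delta del: sum.atMost_Suc)
qed

lemma fu_lyap: "k \<le> n \<Longrightarrow> aa - aa / real MM * VV t k \<le> fu \<alpha> \<beta> n (Suc t) k"
proof (induction t arbitrary: k)
  case 0
  have p0: "(1 - qq) * \<beta> ^ k \<le> fu \<alpha> \<beta> n (Suc 0) k"
    unfolding fu1 qq_def using p0K[OF ctx10 0] by simp
  have "aa - aa / real MM * real k \<le> (1 - qq) * \<beta> ^ k"
  proof (cases "k \<le> MM")
    case True
    have "\<beta> ^ MM \<le> \<beta> ^ k" using True b0 b1 by (intro power_decreasing) auto
    then have "aa \<le> (1 - qq) * \<beta> ^ k" unfolding aa_def using qq_b by (intro mult_left_mono) auto
    moreover have "0 \<le> aa / real MM * real k" using aa_pos by simp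
    ultimately show ?thesis by linarith
  next
    case False
    then have "aa \<le> aa / real MM * real k" using aa_pos MM_b by (simp add: field_simps)
    moreover have "0 \<le> (1 - qq) * \<beta> ^ k" using qq_b b0 by simp
    ultimately show ?thesis by linarith
  qed
  then show ?case using p0 unfolding VV_def by simp
next
  case (Suc t)
  define c where "c = qq * (\<Sum>i<t. (1-\<beta>) ^ i)"
  have VVt: "VV t = (\<lambda>j. (1-\<beta>) ^ t * real j + c)" unfolding VV_def c_def by auto
  have bnn: "0 \<le> aa / real MM" using aa_pos MM_b by simp
  have "PK \<alpha> \<beta> n (VV t) k = (1-\<beta>) ^ t * PK \<alpha> \<beta> n real k + c"
    unfolding VVt PK_add PK_scale PKc[OF ctx10] by simp
  also have "\<dots> \<le> (1-\<beta>) ^ t * ((1-\<beta>) * real k + (1-\<alpha>)*(1-\<beta>)) + c"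
    using PK_mean[OF ctx10 Suc.prems] b1 by (intro add_right_mono mult_left_mono) auto
  also have "\<dots> = VV (Suc t) k" unfolding VV_def c_def qq_def by (simp add: algebra_simps)
  finally have PV: "PK \<alpha> \<beta> n (VV t) k \<le> VV (Suc t) k" .
  have "aa - aa / real MM * VV (Suc t) k \<le> aa - aa / real MM * PK \<alpha> \<beta> n (VV t) k"
    using mult_left_mono[OF PV bnn] by linarith
  also have "\<dots> = PK \<alpha> \<beta> n (\<lambda>j. aa - aa / real MM * VV t j) k"
    unfolding PK_diff PK_scale PKc[OF ctx10] ..
  also have "\<dots> \<le> PK \<alpha> \<beta> n (fu \<alpha> \<beta> n (Suc t)) k"
    using Suc.IH by (intro PK_mono'[OF ctx10 Suc.prems]) auto
  finally show ?case by simp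
qed

lemma geo_le: "(\<Sum>i<t. (1-\<beta>) ^ i) \<le> 1 / \<beta>"
proof -
  have "(\<Sum>i<t. (1-\<beta>) ^ i) = (1 - (1-\<beta>) ^ t) / \<beta>"
    using sum_gp_strict[of "1-\<beta>" t] b0 by simp
  also have "\<dots> \<le> 1 / \<beta>" using b0 b1 by (intro divide_right_mono) auto
  finally show ?thesis .
qed

lemma fu_lower:
  assumes t: "n \<le> t" and nS: "real n * (1-\<beta>) ^ n \<le> 1" and k: "k \<le> n"
  shows "aa / 2 \<le> fu \<alpha> \<beta> n (Suc t) k"
proof -
  have St: "(1-\<beta>) ^ t \<le> (1-\<beta>) ^ n" using t b0 b1 by (intro power_decreasing) auto
  have "(1-\<beta>) ^ t * real k \<le> (1-\<beta>) ^ n * real n"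
    using St k b1 by (intro mult_mono) auto
  moreover have "qq * (\<Sum>i<t. (1-\<beta>) ^ i) \<le> 1 * (1 / \<beta>)"
    using qq_b geo_le b1 by (intro mult_mono) (auto intro!: sum_nonneg)
  ultimately have V: "VV t k \<le> 1 + 1 / \<beta>" unfolding VV_def using nS by (simp add: mult.commute)
  have "aa / real MM * VV t k \<le> aa / real MM * (1 + 1/\<beta>)"
    using V aa_pos MM_b by (intro mult_left_mono) auto
  also have "\<dots> \<le> aa / 2"
  proof -
    have "(1 + 1/\<beta>) / real MM \<le> 1/2" using MM_b by (simp add: field_simps)
    then have "aa * ((1 + 1/\<beta>) / real MM) \<le> aa * (1/2)" using aa_pos by (intro mult_left_mono) auto
    then show ?thesis by (simp add: field_simps)
  qed
  finally show ?thesis using fu_lyap[OF k, of t] by linarith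
qed

lemma ind_count: "(\<Sum>s<3*n. ind n (3*n) s) = real n"
proof -
  have "(\<Sum>s<3*n. ind n (3*n) s) = (\<Sum>s\<in>{..<3*n} \<inter> {s. n \<le> 3*n - s \<and> 3*n - s < 2*n}. 1)"
    unfolding ind_def[OF ctx10] by (simp add: sum.If_cases)
  also have "{..<3*n} \<inter> {s. n \<le> 3*n - s \<and> 3*n - s < 2*n} = {Suc n..2*n}" by auto
  finally show ?thesis by simp
qed

lemma Aall_le: "real n * Aall \<alpha> \<beta> n \<le> 1"
proof -
  have "Aall \<alpha> \<beta> n = ak \<alpha> \<beta> n (n - 1) * (\<Prod>i<n - 1. ak \<alpha> \<beta> n i)"
    unfolding Aall_def[OF ctx10] using n0 by (metis Suc_diff_1 prod.lessThan_Suc mult.commute)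
  also have "\<dots> \<le> ak \<alpha> \<beta> n (n - 1) * 1"
  proof (intro mult_left_mono prod_le_1 conjI)
    fix i show "0 \<le> ak \<alpha> \<beta> n i" by (rule ak_nonneg[OF ctx10])
    show "ak \<alpha> \<beta> n i \<le> 1" unfolding ak_def[OF ctx10] by (rule pmf_le_1)
  qed (rule ak_nonneg[OF ctx10])
  also have "ak \<alpha> \<beta> n (n - 1) = (1 - real (n - 1) / real n) * qq * (1-\<beta>) ^ (n - 1)"
    using ak_eq[OF ctx10, of "n - 1"] unfolding qq_def by simp
  also have "(1 - real (n - 1) / real n) = 1 / real n" using n0 by (simp add: field_simps of_nat_diff)
  finally have "Aall \<alpha> \<beta> n \<le> 1 / real n * (qq * (1-\<beta>) ^ (n - 1))" by simp
  also have "\<dots> \<le> 1 / real n * 1"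
    using qq_b b0 b1 by (intro mult_left_mono mult_le_one power_le_one) auto
  finally show ?thesis using n0 by (simp add: field_simps)
qed

lemma lower_main:
  assumes nS: "real n * (1-\<beta>) ^ n \<le> 1" and k: "k \<le> n"
  shows "real n * Aall \<alpha> \<beta> n * (aa / 2) / 2 \<le> 1 - Fs \<alpha> \<beta> n (3*n) k"
proof -
  define G where "G = 1 - Fs \<alpha> \<beta> n (3*n) k"
  define q0 where "q0 = aa / 2"
  define X where "X = Aall \<alpha> \<beta> n"
  have G0: "0 \<le> G" unfolding G_def using F_bounds[OF ctx10 k] by simp
  have X0: "0 \<le> X" unfolding X_def by (rule Aall_nonneg[OF ctx10])
  have tm: "ind n (3*n) s * (q0 - G) \<le> ind n (3*n) s * ku \<alpha> \<beta> n s k" if s: "s < 3*n" for s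
  proof (cases "n \<le> 3*n - s \<and> 3*n - s < 2*n")
    case True
    then obtain t where st: "s = Suc t" "n \<le> t" by (cases s) auto
    have "q0 \<le> fu \<alpha> \<beta> n s k" unfolding q0_def st(1) by (rule fu_lower[OF st(2) nS k])
    moreover have "fu \<alpha> \<beta> n s k - ku \<alpha> \<beta> n s k \<le> 1 - Fs \<alpha> \<beta> n s k" by (rule fu_ku[OF ctx10 k])
    moreover have "Fs \<alpha> \<beta> n (3*n) k \<le> Fs \<alpha> \<beta> n s k" using s k by (intro F_anti[OF ctx10]) auto
    ultimately have "q0 - G \<le> ku \<alpha> \<beta> n s k" unfolding G_def by linarith
    then show ?thesis using True by (simp add: ind_def[OF ctx10])
  next
    case False then show ?thesis by (auto simp: ind_def[OF ctx10])
  qed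
  have "X * (real n * (q0 - G)) = X * (\<Sum>s<3*n. ind n (3*n) s * (q0 - G))"
    unfolding sum_distrib_right[symmetric] ind_count by simp
  also have "\<dots> \<le> X * (\<Sum>s<3*n. ind n (3*n) s * ku \<alpha> \<beta> n s k)"
  proof (rule mult_left_mono[OF _ X0])
    show "(\<Sum>s<3*n. ind n (3*n) s * (q0 - G)) \<le> (\<Sum>s<3*n. ind n (3*n) s * ku \<alpha> \<beta> n s k)"
      by (rule sum_mono) (use tm in auto)
  qed
  also have "\<dots> = cc \<alpha> \<beta> n (3*n) k" unfolding cc_def[OF ctx10] X_def ..
  also have "\<dots> \<le> G" unfolding G_def by (rule cc_le_g[OF ctx10 k])
  finally have main: "X * real n * q0 \<le> G * (1 + X * real n)" by (simp add: algebra_simps)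
  have "X * real n \<le> 1" using Aall_le unfolding X_def by (simp add: mult.commute)
  then have "G * (1 + X * real n) \<le> G * 2" using G0 by (intro mult_left_mono) auto
  with main show ?thesis unfolding G_def[symmetric] X_def[symmetric] q0_def[symmetric] by (simp add: algebra_simps)
qed

end


lemma Fs_mult:
  assumes ctx: "0 \<le> \<alpha>" "\<alpha> < 1" "0 < \<beta>" "\<beta> < 1" "0 < n"
    and H: "\<And>j. j \<le> n \<Longrightarrow> Fs \<alpha> \<beta> n b j \<le> Mb"
  shows "k \<le> n \<Longrightarrow> Fs \<alpha> \<beta> n (m + b) k \<le> Fs \<alpha> \<beta> n m k * Mb"
proof (induction m arbitrary: k)
  case 0
  show ?case
  proof (cases "k = n")
    case True then show ?thesis by (cases b) auto
  next
    case False then show ?thesis using H[OF 0] by simp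
  qed
next
  case (Suc m)
  show ?case
  proof (cases "k = n")
    case False
    have "PK \<alpha> \<beta> n (Fs \<alpha> \<beta> n (m + b)) k \<le> PK \<alpha> \<beta> n (\<lambda>j. Fs \<alpha> \<beta> n m j * Mb) k"
      using Suc by (intro PK_mono'[OF ctx]) auto
    also have "\<dots> = Mb * PK \<alpha> \<beta> n (Fs \<alpha> \<beta> n m) k"
      by (subst mult.commute) (rule PK_scale)
    finally show ?thesis using False by (simp add: mult.commute)
  qed simp
qed

lemma Fs_pow:
  assumes ctx: "0 \<le> \<alpha>" "\<alpha> < 1" "0 < \<beta>" "\<beta> < 1" "0 < n"
    and p: "0 \<le> p" "p \<le> 1" and H: "\<And>k. k \<le> n \<Longrightarrow> Fs \<alpha> \<beta> n L k \<le> 1 - p"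
  shows "k \<le> n \<Longrightarrow> Fs \<alpha> \<beta> n (j * L) k \<le> (1 - p) ^ j"
proof (induction j arbitrary: k)
  case 0 then show ?case using F_bounds[OF ctx 0] by simp
next
  case (Suc j)
  have "Fs \<alpha> \<beta> n (L + j * L) k \<le> Fs \<alpha> \<beta> n L k * (1 - p) ^ j"
    by (rule Fs_mult[OF ctx Suc.IH Suc.prems])
  also have "\<dots> \<le> (1 - p) * (1 - p) ^ j"
    using H[OF Suc.prems] p by (intro mult_right_mono) auto
  finally show ?case by (simp add: add.commute)
qed

lemma aa_le1:
  fixes n :: nat
  assumes ctx: "0 \<le> \<alpha>" "\<alpha> < 1" "0 < \<beta>" "\<beta> < 1" "0 < n"
  shows "aa \<alpha> \<beta> \<le> 1"
proof -
  have "aa \<alpha> \<beta> = (1 - qq \<alpha> \<beta>) * \<beta> ^ MM \<beta>" by (rule aa_def[OF ctx])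
  also have "\<dots> \<le> 1" using qq_b[OF ctx] ctx by (intro mult_le_one power_le_one) auto
  finally show ?thesis .
qed

theorem mainTheorem17:
  fixes \<alpha> \<beta> :: real
  assumes "0 \<le> \<alpha>" "\<alpha> < 1" "0 < \<beta>" "\<beta> < 1"
  shows "\<exists>C c. 0 < C \<and> 0 < c \<and> (\<exists>N. \<forall>n\<ge>N. \<forall>A. A \<subseteq> {..<n} \<longrightarrow>
           (\<forall>x::real. x \<ge> 0 \<longrightarrow> cc_tail \<alpha> \<beta> n A (x / cc_mu \<alpha> \<beta> n) \<le> C * exp (- c * x)))"
proof -
  have ctx1: "0 \<le> \<alpha>" "\<alpha> < 1" "0 < \<beta>" "\<beta> < 1" "0 < (1::nat)" using assms by auto
  define a where "a = aa \<alpha> \<beta>"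
  define D where "D = exp (Eb \<beta> / \<beta>^2)"
  define c where "c = a / (12 * D)"
  have a_pos: "0 < a" unfolding a_def by (rule aa_pos[OF ctx1])
  have a_le: "a \<le> 1" unfolding a_def by (rule aa_le1[OF ctx1])
  have D_pos: "0 < D" unfolding D_def by simp
  have c_pos: "0 < c" unfolding c_def using a_pos D_pos by simp
  have "(\<lambda>n. of_nat n * (1-\<beta>) ^ n) \<longlonglongrightarrow> (0::real)"
    using assms by (intro powser_times_n_limit_0) auto
  then have "eventually (\<lambda>n. real n * (1-\<beta>) ^ n < 1) sequentially"
    by (rule order_tendstoD(2)) simp
  then obtain N0 where N0: "\<And>n. n \<ge> N0 \<Longrightarrow> real n * (1-\<beta>) ^ n < 1"
    unfolding eventually_sequentially by blast
  have main: "cc_tail \<alpha> \<beta> n A (x / cc_mu \<alpha> \<beta> n) \<le> exp 2 * exp (- c * x)"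
    if n: "n \<ge> max 1 N0" and A: "A \<subseteq> {..<n}" and x: "x \<ge> 0" for n A x
  proof -
    have n0: "0 < n" using n by simp
    note ctx = assms n0
    have nS: "real n * (1-\<beta>) ^ n \<le> 1" using N0[of n] n by simp
    define k where "k = card A"
    have k: "k \<le> n" unfolding k_def using card_mono[OF _ A] by simp
    define mu where "mu = cc_mu \<alpha> \<beta> n"
    have mu_pos: "0 < mu" unfolding mu_def by (rule mu_pos[OF ctx])
    define X where "X = Aall \<alpha> \<beta> n"
    have mu_le: "mu \<le> X * D"
      unfolding mu_def X_def D_def Aall_def[OF ctx] using mu_upper[OF ctx] by simp
    have "0 < X * D" using mu_pos mu_le by linarith
    then have X_pos: "0 < X" using D_pos by (simp add: zero_less_mult_iff)
    have nX: "real n * X \<le> 1" unfolding X_def by (rule Aall_le[OF ctx])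
    define p where "p = real n * X * (a / 2) / 2"
    have p0: "0 \<le> p" unfolding p_def using X_pos a_pos by simp
    have p1: "p \<le> 1"
    proof -
      have "real n * X * (a / 2) / 2 \<le> 1 * (1 / 2) / 2"
        using nX a_le a_pos X_pos by (intro divide_right_mono mult_mono) auto
      then show ?thesis unfolding p_def by simp
    qed
    define L where "L = 3 * n"
    have L1: "1 \<le> L" unfolding L_def using n0 by simp
    have HL: "Fs \<alpha> \<beta> n L k' \<le> 1 - p" if "k' \<le> n" for k'
      using lower_main[OF ctx nS that] unfolding p_def X_def a_def L_def by simp
    define t where "t = x / mu"
    have t0: "0 \<le> t" unfolding t_def using x mu_pos by simp
    define m where "m = nat \<lfloor>t\<rfloor>"
    have mt: "t - 1 \<le> real m" unfolding m_def using t0 by linarith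
    define j where "j = m div L"
    have jL: "j * L \<le> m" unfolding j_def by simp
    have mj: "real m < (real j + 1) * real L"
    proof -
      have "m mod L < L" using L1 by simp
      moreover have "m = m div L * L + m mod L" by simp
      ultimately have "m < m div L * L + L" by linarith
      then have "m < (j + 1) * L" unfolding j_def by (simp add: algebra_simps)
      then have "real m < real ((j + 1) * L)" by linarith
      then show ?thesis by (simp add: algebra_simps)
    qed
    have "cc_tail \<alpha> \<beta> n A (x / cc_mu \<alpha> \<beta> n) = Fs \<alpha> \<beta> n m k"
      unfolding cc_tail_def k_def m_def t_def mu_def using cc_surv_Fs[of \<alpha> \<beta> n A] ctx A by simp
    also have "\<dots> \<le> Fs \<alpha> \<beta> n (j * L) k" by (rule F_anti[OF ctx jL k])
    also have "\<dots> \<le> (1 - p) ^ j" by (rule Fs_pow[OF ctx p0 p1 HL k])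
    also have "\<dots> \<le> exp (- p) ^ j"
      using p1 exp_ge_add_one_self[of "-p"] by (intro power_mono) auto
    also have "\<dots> = exp (- (p * real j))" by (simp add: exp_of_nat_mult[symmetric] mult.commute)
    also have "\<dots> \<le> exp (2 - c * x)"
    proof -
      have "real j > real m / real L - 1" using mj L1 by (simp add: field_simps)
      moreover have "(t - 1) / real L \<le> real m / real L" using mt L1 by (intro divide_right_mono) auto
      ultimately have j1: "real j \<ge> (t - 1) / real L - 1" by linarith
      have "p * real j \<ge> p * ((t - 1) / real L - 1)" using j1 p0 by (intro mult_left_mono) auto
      moreover have "p * ((t - 1) / real L - 1) = p * t / real L - p / real L - p"
        using L1 by (simp add: field_simps)
      moreover have "p / real L \<le> 1" using p1 p0 L1 by (simp add: field_simps)
      moreover have "c * x \<le> p * t / real L"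
      proof -
        have "p * t / real L = X * a * x / (12 * mu)"
          unfolding p_def t_def L_def using n0 by (simp add: field_simps)
        moreover have "a * x / (12 * D) \<le> X * a * x / (12 * mu)"
        proof -
          have "a * x / (12 * D) = (X * a * x) / (12 * (X * D))" using X_pos by simp
          also have "\<dots> \<le> (X * a * x) / (12 * mu)"
            using mu_le mu_pos X_pos a_pos x D_pos by (intro divide_left_mono) auto
          finally show ?thesis .
        qed
        ultimately show ?thesis unfolding c_def by simp
      qed
      ultimately have "2 - c * x \<ge> - (p * real j)" using p1 by linarith
      then show ?thesis by simp
    qed
    also have "\<dots> = exp 2 * exp (- c * x)" by (simp add: exp_diff exp_minus field_simps)
    finally show ?thesis .
  qed
  have H: "\<forall>n\<ge>max 1 N0. \<forall>A. A \<subseteq> {..<n} \<longrightarrow>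
           (\<forall>x::real. x \<ge> 0 \<longrightarrow> cc_tail \<alpha> \<beta> n A (x / cc_mu \<alpha> \<beta> n) \<le> exp 2 * exp (- c * x))"
    using main by blast
  have "0 < exp (2::real)" by simp
  then show ?thesis using c_pos H by blast
qed


end
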